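(* Let $\mathcal P$ and $\mathrm{conv}(\mathcal P)$ be as in the context. Let $\eta$ be a real number with $0\le\eta\le\min\{L,(\overline C-\overline V)/V\}$ and let $\alpha,\beta,s_{\max}$ be integers such that (a) $L+1\le s_{\max}\le\min\{T-2,\lfloor(\overline C-\overline V)/V\rfloor\}$, (b) $1\le\alpha<\beta\le s_{\max}$, and (c) $\beta=\alpha+1$ or $s_{\max}\le L+\alpha$. Let $\mathcal S=[1,\alpha]_{\mathbb Z}\cup[\beta,s_{\max}]_{\mathbb Z}$. For any $t\in[s_{\max}+2,T]_{\mathbb Z}$, the inequality $$x_t\le(\overline V+\eta V)y_t+(\overline C-\overline V-\eta V)y_{t-1}-\sum_{s\in\mathcal S}(\overline C-\overline V-sV)(y_{t-s}-y_{t-s-1})\qquad(\ast)$$ is valid for $\mathrm{conv}(\mathcal P)$. For any $t\in[1,T-s_{\max}-1]_{\mathbb Z}$, the inequality $$x_t\le(\overline V+\eta V)y_t+(\overline C-\overline V-\eta V)y_{t+1}-\sum_{s\in\mathcal S}(\overline C-\overline V-sV)(y_{t+s}-y_{t+s+1})\qquad(\ast\ast)$$ is valid for $\mathrm{conv}(\mathcal P)$. Furthermore, $(\ast)$ and $(\ast\ast)$ are facet-defining for $\mathrm{conv}(\mathcal P)$ when $\eta\in\{0,(\overline C-\overline V)/V\}$ or $\eta=L\in\mathcal S$.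
   Context: For integers $a,b$, $[a,b]_{\mathbb Z}=\{a,a+1,\dots,b\}$ if $a\le b$ and $\emptyset$ otherwise. Fix a positive integer $T$, positive integers $L$ (minimum up time) and $\ell$ (minimum down time), and reals $\overline C,\underline C,V,\overline V$ with $\overline C>\underline C>0$, $V>0$, $\overline V+V\le\overline C$ and $\underline C<\overline V<\underline C+V$. $\mathcal P$ is the set of $(\mathbf x,\mathbf y)=((x_1,\dots,x_T),(y_1,\dots,y_T))\in\mathbb R_+^T\times\{0,1\}^T$ satisfying: (i) $-y_{t-1}+y_t-y_k\le 0$ for all $t\in[2,T]_{\mathbb Z}$, $k\in[t,\min\{T,t+L-1\}]_{\mathbb Z}$; (ii) $y_{t-1}-y_t+y_k\le 1$ for all $t\in[2,T]_{\mathbb Z}$, $k\in[t,\min\{T,t+\ell-1\}]_{\mathbb Z}$; (iii) $-x_t+\underline C y_t\le 0$ and $x_t-\overline C y_t\le 0$ for all $t\in[1,T]_{\mathbb Z}$; (iv) $x_t-x_{t-1}\le Vy_{t-1}+\overline V(1-y_{t-1})$ for all $t\in[2,T]_{\mathbb Z}$; (v) $x_{t-1}-x_t\le Vy_t+\overline V(1-y_t)$ for all $t\in[2,T]_{\mathbb Z}$. $\mathrm{conv}(\mathcal P)\subseteq\mathbb R^{2T}$ is its convex hull. A linear inequality is valid for $\mathrm{conv}(\mathcal P)$ if all its points satisfy it, and facet-defining if moreover the set of points of $\mathrm{conv}(\mathcal P)$ satisfying it with equality has dimension $\dim\mathrm{conv}(\mathcal P)-1$. *)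

theory Defs
  imports "HOL-Analysis.Analysis" "HOL-Library.Function_Algebras"
begin

text \<open>Real vector space structure on functions (pointwise). Points of R^T are
  represented as functions nat \<Rightarrow> real vanishing outside the index set 1..T.\<close>

instantiation "fun" :: (type, real_vector) real_vector
begin
definition scaleR_fun :: "real \<Rightarrow> ('a \<Rightarrow> 'b) \<Rightarrow> 'a \<Rightarrow> 'b"
  where "scaleR_fun r f = (\<lambda>i. r *\<^sub>R f i)"
instance
  by standard (auto simp: scaleR_fun_def fun_eq_iff scaleR_add_right scaleR_add_left)
end

type_synonym point = "(nat \<Rightarrow> real) \<times> (nat \<Rightarrow> real)"

text \<open>The set P of the context (x_t, y_t for t in 1..T; all other coordinates are zero).\<close>
definition UCP :: "nat \<Rightarrow> nat \<Rightarrow> nat \<Rightarrow> real \<Rightarrow> real \<Rightarrow> real \<Rightarrow> real \<Rightarrow> point set" where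
  "UCP T L l Cu Cl V Vu = {(x, y).
     (\<forall>t. t \<notin> {1..T} \<longrightarrow> x t = 0 \<and> y t = 0) \<and>
     (\<forall>t\<in>{1..T}. x t \<ge> 0 \<and> y t \<in> {0, 1}) \<and>
     (\<forall>t\<in>{2..T}. \<forall>k\<in>{t..min T (t + L - 1)}. - y (t - 1) + y t - y k \<le> 0) \<and>
     (\<forall>t\<in>{2..T}. \<forall>k\<in>{t..min T (t + l - 1)}. y (t - 1) - y t + y k \<le> 1) \<and>
     (\<forall>t\<in>{1..T}. - x t + Cl * y t \<le> 0 \<and> x t - Cu * y t \<le> 0) \<and>
     (\<forall>t\<in>{2..T}. x t - x (t - 1) \<le> V * y (t - 1) + Vu * (1 - y (t - 1))) \<and>
     (\<forall>t\<in>{2..T}. x (t - 1) - x t \<le> V * y t + Vu * (1 - y t))}"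

definition affdim :: "'a::real_vector set \<Rightarrow> int" where
  "affdim S = (if S = {} then -1 else int (dim ((\<lambda>v. v - (SOME a. a \<in> S)) ` S)))"

definition valid_ineq :: "point set \<Rightarrow> (point \<Rightarrow> real) \<Rightarrow> (point \<Rightarrow> real) \<Rightarrow> bool" where
  "valid_ineq Q lhs rhs = (\<forall>p\<in>Q. lhs p \<le> rhs p)"

definition facet_ineq :: "point set \<Rightarrow> (point \<Rightarrow> real) \<Rightarrow> (point \<Rightarrow> real) \<Rightarrow> bool" where
  "facet_ineq Q lhs rhs = (valid_ineq Q lhs rhs \<and>
     affdim {p\<in>Q. lhs p = rhs p} = affdim Q - 1)"

end

theory Submission
  imports Defs
begin

lemma linear_zero_on_span:
  fixes \<psi> :: "'a::real_vector \<Rightarrow> real"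
  assumes "linear \<psi>" "\<forall>x\<in>S. \<psi> x = 0" "x \<in> span S"
  shows "\<psi> x = 0"
proof -
  have "span S \<subseteq> {x. \<psi> x = 0}"
  proof (rule span_minimal)
    show "S \<subseteq> {x. \<psi> x = 0}" using assms by auto
    show "subspace {x. \<psi> x = 0}"
      using assms(1) by (simp add: subspace_def linear_0 linear_add linear_scale)
  qed
  then show ?thesis using assms by auto
qed

lemma dim_insert_gen:
  fixes S W :: "'a::real_vector set"
  assumes "finite W" "S \<subseteq> span W" "q \<notin> span S"
  shows "dim (insert q S) = dim S + 1"
proof -
  obtain B where B: "B \<subseteq> S" "independent B" "S \<subseteq> span B" "card B = dim S"
    by (rule basis_exists)
  have "B \<subseteq> span W" using B(1) assms(2) by auto
  then have fB: "finite B" using independent_span_bound[OF assms(1) B(2)] by auto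
  have sB: "span B = span S"
    using B(1,3) by (metis span_mono span_span subset_antisym)
  have qB: "q \<notin> span B" using sB assms(3) by simp
  have ind: "independent (insert q B)" using independent_insertI[OF qB B(2)] .
  have "span (insert q B) = span (insert q S)"
    using sB by (metis span_insert)
  then have "dim (insert q S) = card (insert q B)"
    using dim_eq_card[OF _ ind] by metis
  also have "\<dots> = card B + 1"
  proof -
    have "q \<notin> B" using qB span_base[of q B] by blast
    then show ?thesis using fB by simp
  qed
  finally show ?thesis using B(4) by simp
qed

lemma facet_generic:
  fixes P B W :: "point set" and \<psi> :: "point \<Rightarrow> real"
  assumes lin: "linear \<psi>"
    and zero: "0 \<in> P"
    and PW: "P \<subseteq> span W" and finW: "finite W"
    and BP: "B \<subseteq> P" and Bz: "\<forall>b\<in>B. \<psi> b = 0"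
    and pb: "pb \<in> P" "\<psi> pb \<noteq> 0"
    and WB: "W \<subseteq> span (insert pb B)"
  shows "affdim {p \<in> convex hull P. \<psi> p = 0} = affdim (convex hull P) - 1"
proof -
  define Q where "Q = convex hull P"
  define F where "F = {p \<in> Q. \<psi> p = 0}"
  have PQ: "P \<subseteq> Q" unfolding Q_def by (rule hull_subset)
  have QW: "Q \<subseteq> span W" unfolding Q_def
    by (rule hull_minimal[OF PW]) (simp add: subspace_imp_convex)
  have z: "\<psi> 0 = 0" using lin by (simp add: linear_0)
  have zF: "0 \<in> F" using zero PQ z unfolding F_def by auto
  then have Fne: "F \<noteq> {}" by auto
  have Qne: "Q \<noteq> {}" using zero PQ by auto
  define aQ where "aQ = (SOME a. a \<in> Q)"
  define aF where "aF = (SOME a. a \<in> F)"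
  have aQ: "aQ \<in> Q" unfolding aQ_def using Qne by (simp add: some_in_eq)
  have aF: "aF \<in> F" unfolding aF_def using Fne by (simp add: some_in_eq)
  define Q' where "Q' = (\<lambda>v. v - aQ) ` Q"
  define F' where "F' = (\<lambda>v. v - aF) ` F"
  define q where "q = pb - aF"
  have FQ: "F \<subseteq> Q" unfolding F_def by auto
  have Q'W: "Q' \<subseteq> span W" unfolding Q'_def using QW aQ by (intro image_subsetI span_diff) auto
  have F'W: "F' \<subseteq> span W" unfolding F'_def using QW aF FQ by (intro image_subsetI span_diff) auto
  have aFs: "aF \<in> span F'"
  proof -
    have "0 - aF \<in> F'" unfolding F'_def using zF by auto
    then have "-(0 - aF) \<in> span F'" by (intro span_neg span_base)
    then show ?thesis by simp
  qed
  have aFs': "aF \<in> span (insert q F')" using aFs span_mono[of F' "insert q F'"] by auto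
  have c1: "insert pb B \<subseteq> span (insert q F')"
  proof
    fix v assume "v \<in> insert pb B"
    then consider "v = pb" | "v \<in> B" by auto
    then show "v \<in> span (insert q F')"
    proof cases
      case 1
      have "q + aF \<in> span (insert q F')"
        by (rule span_add[OF span_base aFs']) simp
      then show ?thesis using 1 q_def by simp
    next
      case 2
      then have "v \<in> F" using BP PQ Bz unfolding F_def by auto
      then have "v - aF \<in> F'" unfolding F'_def by auto
      then have "v - aF \<in> insert q F'" by simp
      then have "(v - aF) + aF \<in> span (insert q F')"
        by (rule span_add[OF span_base aFs'])
      then show ?thesis by simp
    qed
  qed
  have s1: "span W \<subseteq> span (insert q F')"
    using span_minimal[OF WB subspace_span] span_minimal[OF c1 subspace_span] by (rule subset_trans)
  have c2: "insert q F' \<subseteq> span Q'"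
  proof
    fix v assume "v \<in> insert q F'"
    have "\<exists>f. f \<in> Q \<and> v = f - aF"
    proof (cases "v = q")
      case True then show ?thesis unfolding q_def using pb PQ by blast
    next
      case False then have "v \<in> F'" using \<open>v \<in> insert q F'\<close> by blast
      then show ?thesis unfolding F'_def using FQ by blast
    qed
    then obtain f where f: "f \<in> Q" "v = f - aF" by blast
    have m1: "f - aQ \<in> Q'" unfolding Q'_def using f(1) by (rule imageI)
    have m2: "aF - aQ \<in> Q'" unfolding Q'_def using aF FQ by blast
    have "(f - aQ) - (aF - aQ) \<in> span Q'"
      using m1 m2 by (intro span_diff span_base)
    then show "v \<in> span Q'" using f by simp
  qed
  have s2: "span (insert q F') \<subseteq> span Q'"
    using c2 by (simp add: span_minimal)
  have s3: "span Q' \<subseteq> span W" using Q'W by (simp add: span_minimal)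
  have eqsp: "span Q' = span (insert q F')" using s1 s2 s3 by auto
  have psiF': "\<forall>x\<in>F'. \<psi> x = 0"
    unfolding F'_def using aF by (auto simp: F_def linear_diff[OF lin])
  have qn: "q \<notin> span F'"
  proof
    assume "q \<in> span F'"
    then have "\<psi> q = 0" using linear_zero_on_span[OF lin psiF'] by simp
    moreover have "\<psi> q = \<psi> pb" unfolding q_def using aF by (simp add: F_def linear_diff[OF lin])
    ultimately show False using pb by simp
  qed
  have "dim Q' = dim (insert q F')" using eqsp span_eq_dim by blast
  also have "\<dots> = dim F' + 1" using dim_insert_gen[OF finW F'W qn] .
  finally have dd: "dim Q' = dim F' + 1" .
  have e1: "affdim F = int (dim F')" using Fne unfolding affdim_def F'_def aF_def by simp
  have e2: "affdim Q = int (dim Q')" using Qne unfolding affdim_def Q'_def aQ_def by simp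
  have "affdim F = affdim Q - 1" using e1 e2 dd by simp
  then show ?thesis unfolding F_def Q_def .
qed

lemma tele_sum:
  fixes a :: "nat \<Rightarrow> real" and D V :: real
  assumes "i \<le> n"
  shows "(\<Sum>s\<in>{i..n}. (D - real s * V) * (a s - a (s+1)))
       = (D - real i * V) * a i - V * (\<Sum>s\<in>{i+1..n}. a s) - (D - real n * V) * a (n+1)"
  using assms
proof (induction n rule: dec_induct)
  case base
  then show ?case by (simp add: algebra_simps)
next
  case (step n)
  have e1: "{i..Suc n} = insert (Suc n) {i..n}" using step by auto
  have e2: "{i+1..Suc n} = insert (Suc n) {i+1..n}" using step by auto
  show ?case using step by (simp add: e1 e2 algebra_simps)
qed

lemma sum_ones:
  fixes a :: "nat \<Rightarrow> real"
  assumes "\<forall>s. i \<le> s \<and> s \<le> n \<longrightarrow> a s = 1"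
  shows "(\<Sum>s\<in>{i..n}. a s) = real (n + 1 - i)"
proof -
  have "(\<Sum>s\<in>{i..n}. a s) = (\<Sum>s\<in>{i..n}. 1)" using assms by (intro sum.cong) auto
  then show ?thesis by simp
qed

lemma sum_le_ones:
  fixes a :: "nat \<Rightarrow> real"
  assumes "\<forall>s. i \<le> s \<and> s \<le> n \<longrightarrow> a s \<le> 1"
  shows "(\<Sum>s\<in>{i..n}. a s) \<le> real (n + 1 - i)"
proof -
  have "(\<Sum>s\<in>{i..n}. a s) \<le> (\<Sum>s\<in>{i..n}. 1)" using assms by (intro sum_mono) auto
  then show ?thesis by simp
qed

lemma sum_nonneg01:
  fixes a :: "nat \<Rightarrow> real"
  assumes "\<forall>s. i \<le> s \<and> s \<le> n \<longrightarrow> a s \<ge> 0"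
  shows "(\<Sum>s\<in>{i..n}. a s) \<ge> 0"
  using assms by (intro sum_nonneg) auto

lemma sum_mono_interval:
  fixes a :: "nat \<Rightarrow> real"
  assumes "\<forall>s. i \<le> s \<and> s \<le> n \<longrightarrow> a s \<ge> 0" "k \<le> n"
  shows "(\<Sum>s\<in>{i..k}. a s) \<le> (\<Sum>s\<in>{i..n}. a s)"
  using assms by (intro sum_mono2) auto

lemma sum_split_interval:
  fixes a :: "nat \<Rightarrow> real"
  assumes "i \<le> k+1" "k \<le> n"
  shows "(\<Sum>s\<in>{i..n}. a s) = (\<Sum>s\<in>{i..k}. a s) + (\<Sum>s\<in>{k+1..n}. a s)"
proof -
  have "{i..n} = {i..k} \<union> {k+1..n}" using assms by auto
  moreover have "{i..k} \<inter> {k+1..n} = {}" by auto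
  ultimately show ?thesis by (simp add: sum.union_disjoint)
qed

locale win =
  fixes L m \<alpha> \<beta> :: nat and \<eta> D V Vu :: real and a :: "nat \<Rightarrow> real" and xt :: real
  assumes V: "V > 0" and eta0: "0 \<le> \<eta>" and etaL: "\<eta> \<le> real L" and etaD: "\<eta> * V \<le> D"
    and mD: "real m * V \<le> D" and Lm: "L + 1 \<le> m"
    and al: "1 \<le> \<alpha>" "\<alpha> < \<beta>" "\<beta> \<le> m" and cnd: "\<beta> = \<alpha> + 1 \<or> m \<le> L + \<alpha>"
    and H1: "\<forall>s\<le>m+1. a s = 0 \<or> a s = 1"
    and H2: "\<forall>p r q. p < r \<longrightarrow> r < q \<longrightarrow> q \<le> m+1 \<longrightarrow> a p = 0 \<longrightarrow> a r = 1 \<longrightarrow> a q = 0 \<longrightarrow> p + L + 1 \<le> q"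
    and H3: "xt \<le> (Vu + D) * a 0"
    and H4: "\<forall>k. 1 \<le> k \<longrightarrow> k \<le> m+1 \<longrightarrow> a k = 0 \<longrightarrow> xt \<le> Vu + (real k - 1) * V"
begin

definition PP :: "nat \<Rightarrow> real" where
  "PP n = (Vu + \<eta> * V) * a 0 + (1 - \<eta>) * V * a 1 + V * (\<Sum>s\<in>{2..n}. a s)"

lemma a01: "s \<le> m+1 \<Longrightarrow> 0 \<le> a s \<and> a s \<le> 1"
  using H1 by force

lemma keyK:
  assumes n: "1 \<le> n" "n \<le> m" and z: "\<exists>z. 1 \<le> z \<and> z \<le> n+1 \<and> a z = 0"
  shows "xt \<le> PP n"
proof -
  obtain k where k: "1 \<le> k \<and> a k = 0" "\<forall>j<k. \<not> (1 \<le> j \<and> a j = 0)"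
    using z exists_least_iff[of "\<lambda>z. 1 \<le> z \<and> a z = 0"] by blast
  have kn: "k \<le> n+1" using k z by (meson not_le order.strict_trans1)
  have ones: "\<forall>s. 1 \<le> s \<and> s < k \<longrightarrow> a s = 1"
    using k(2) H1 kn n by (metis add_le_mono1 le_trans less_imp_le_nat)
  have nn: "\<forall>s. 2 \<le> s \<and> s \<le> n \<longrightarrow> a s \<ge> 0" using a01 n by auto
  have a0: "0 \<le> a 0" "a 0 \<le> 1" using a01 by auto
  show ?thesis
  proof (cases "k = 1")
    case True
    then have a1: "a 1 = 0" using k by simp
    have "V * (\<Sum>s\<in>{2..n}. a s) \<ge> 0" using V sum_nonneg01[OF nn] by simp
    moreover have "xt \<le> Vu * a 0"
    proof (cases "a 0 = 0")
      case True then show ?thesis using H3 by simp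
    next
      case False then have "a 0 = 1" using H1 by auto
      then show ?thesis using H4 k True by auto
    qed
    moreover have "\<eta> * V * a 0 \<ge> 0" using eta0 V a0 by simp
    ultimately show ?thesis unfolding PP_def using a1 by (simp add: algebra_simps)
  next
    case False
    then have k2: "2 \<le> k" using k by simp
    have a1: "a 1 = 1" using ones k2 by simp
    have "(\<Sum>s\<in>{2..k-1}. a s) \<le> (\<Sum>s\<in>{2..n}. a s)"
      using sum_mono_interval[OF nn] kn by simp
    moreover have "(\<Sum>s\<in>{2..k-1}. a s) = real (k - 2)"
    proof -
      have "\<forall>s. 2 \<le> s \<and> s \<le> k-1 \<longrightarrow> a s = 1" using ones by auto
      from sum_ones[OF this] show ?thesis using k2 by (simp add: Suc_diff_le)
    qed
    ultimately have sk: "real k - 2 \<le> (\<Sum>s\<in>{2..n}. a s)" using k2 by simp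
    show ?thesis
    proof (cases "a 0 = 0")
      case True
      have "0 + L + 1 \<le> k" using H2[rule_format, of 0 1 k] True a1 k k2 kn n by auto
      then have "real L + 1 \<le> real k" by simp
      then have "0 \<le> V * (real k - 1 - \<eta>)" using etaL V by simp
      also have "V * (real k - 1 - \<eta>) = (1 - \<eta>) * V + V * (real k - 2)" by (simp add: algebra_simps)
      finally have "0 \<le> (1 - \<eta>) * V + V * (real k - 2)" .
      also have "\<dots> \<le> (1 - \<eta>) * V + V * (\<Sum>s\<in>{2..n}. a s)" using sk V by simp
      finally show ?thesis unfolding PP_def using True a1 H3 by simp
    next
      case False
      then have "a 0 = 1" using H1 by auto
      moreover have "xt \<le> Vu + (real k - 1) * V" using H4 k kn n by simp
      moreover have "V * (real k - 2) \<le> V * (\<Sum>s\<in>{2..n}. a s)" using sk V by simp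
      ultimately show ?thesis unfolding PP_def using a1 by (simp add: algebra_simps)
    qed
  qed
qed

lemma window_valid:
  "xt \<le> (Vu + \<eta> * V) * a 0 + (D - \<eta> * V) * a 1
        - (\<Sum>s\<in>{1..\<alpha>} \<union> {\<beta>..m}. (D - real s * V) * (a s - a (s+1)))"
proof -
  have disj: "{1..\<alpha>} \<inter> {\<beta>..m} = {}" using al by auto
  have su: "(\<Sum>s\<in>{1..\<alpha>} \<union> {\<beta>..m}. (D - real s * V) * (a s - a (s+1)))
      = (\<Sum>s\<in>{1..\<alpha>}. (D - real s * V) * (a s - a (s+1))) + (\<Sum>s\<in>{\<beta>..m}. (D - real s * V) * (a s - a (s+1)))"
    using disj by (simp add: sum.union_disjoint)
  have t1: "(\<Sum>s\<in>{1..\<alpha>}. (D - real s * V) * (a s - a (s+1)))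
      = (D - V) * a 1 - V * (\<Sum>s\<in>{2..\<alpha>}. a s) - (D - real \<alpha> * V) * a (\<alpha>+1)"
    using tele_sum[of 1 \<alpha> D V a, unfolded one_add_one] al by simp
  have t2: "(\<Sum>s\<in>{\<beta>..m}. (D - real s * V) * (a s - a (s+1)))
      = (D - real \<beta> * V) * a \<beta> - V * (\<Sum>s\<in>{\<beta>+1..m}. a s) - (D - real m * V) * a (m+1)"
    using tele_sum[of \<beta> m D V a] al by simp
  define R where "R = (Vu + \<eta> * V) * a 0 + (D - \<eta> * V) * a 1
        - (\<Sum>s\<in>{1..\<alpha>} \<union> {\<beta>..m}. (D - real s * V) * (a s - a (s+1)))"
  have eqR: "R = PP \<alpha> + (D - real \<alpha> * V) * a (\<alpha>+1) - (D - real \<beta> * V) * a \<beta>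
      + V * (\<Sum>s\<in>{\<beta>+1..m}. a s) + (D - real m * V) * a (m+1)"
    unfolding R_def su t1 t2 PP_def by (simp add: algebra_simps)
  have sp1: "(\<Sum>s\<in>{2..m}. a s) = (\<Sum>s\<in>{2..\<alpha>}. a s) + (\<Sum>s\<in>{\<alpha>+1..m}. a s)"
    using sum_split_interval[of 2 \<alpha> m a] al by simp
  have sp2: "(\<Sum>s\<in>{\<alpha>+1..m}. a s) = (\<Sum>s\<in>{\<alpha>+1..\<beta>}. a s) + (\<Sum>s\<in>{\<beta>+1..m}. a s)"
    using sum_split_interval[of "\<alpha>+1" \<beta> m a] al by simp
  define F where "F = PP m + (D - real m * V) * a (m+1)"
  have eqF: "F = PP \<alpha> + V * (\<Sum>s\<in>{\<alpha>+1..\<beta>}. a s) + V * (\<Sum>s\<in>{\<beta>+1..m}. a s) + (D - real m * V) * a (m+1)"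
    unfolding F_def PP_def sp1 sp2 by (simp add: algebra_simps)
  have am: "0 \<le> a (m+1)" using a01 by simp
  have cm: "0 \<le> D - real m * V" using mD by simp
  have cb: "0 \<le> D - real \<beta> * V"
  proof -
    have "real \<beta> * V \<le> real m * V" using al V by simp
    then show ?thesis using mD by simp
  qed
  have Fge: "xt \<le> F"
  proof (cases "\<exists>z. 1 \<le> z \<and> z \<le> m+1 \<and> a z = 0")
    case True
    then have "xt \<le> PP m" using keyK[of m] Lm by simp
    moreover have "0 \<le> (D - real m * V) * a (m+1)" using am cm by simp
    ultimately show ?thesis unfolding F_def by simp
  next
    case False
    then have ones: "\<forall>s. 1 \<le> s \<and> s \<le> m+1 \<longrightarrow> a s = 1" using H1 by force
    then have s2: "(\<Sum>s\<in>{2..m}. a s) = real m - 1" using sum_ones[of 2 m a] Lm by simp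
    have a1: "a 1 = 1" "a (m+1) = 1" using ones Lm by auto
    have Fv: "F = (Vu + \<eta> * V) * a 0 + D - \<eta> * V"
      unfolding F_def PP_def s2 a1 by (simp add: algebra_simps)
    have "0 \<le> (D - \<eta> * V) * (1 - a 0)" using etaD a01[of 0] by simp
    then show ?thesis using H3 unfolding Fv by (simp add: algebra_simps)
  qed
  have "xt \<le> R"
  proof (cases "a (\<alpha>+1) = 0")
    case False
    moreover have "\<alpha>+1 \<le> m+1" using al by simp
    ultimately have a1: "a (\<alpha>+1) = 1" using H1 by blast
    have "(\<Sum>s\<in>{\<alpha>+1..\<beta>}. a s) \<le> real (\<beta> + 1 - (\<alpha>+1))"
      using sum_le_ones[of "\<alpha>+1" \<beta> a] a01 al by auto
    then have "V * (\<Sum>s\<in>{\<alpha>+1..\<beta>}. a s) \<le> V * (real \<beta> - real \<alpha>)" using V al by (simp add: of_nat_diff)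
    moreover have "(D - real \<beta> * V) * a \<beta> \<le> D - real \<beta> * V"
      using cb a01[of \<beta>] al by (simp add: mult_left_le)
    ultimately have "F \<le> R" unfolding eqF eqR a1 by (simp add: algebra_simps)
    then show ?thesis using Fge by simp
  next
    case True
    then have "xt \<le> PP \<alpha>" using keyK[of \<alpha>] al by force
    moreover have "0 \<le> - (D - real \<beta> * V) * a \<beta> + V * (\<Sum>s\<in>{\<beta>+1..m}. a s) + (D - real m * V) * a (m+1)"
    proof (cases "a \<beta> = 0")
      case True
      have "0 \<le> (\<Sum>s\<in>{\<beta>+1..m}. a s)" using a01 by (intro sum_nonneg01) auto
      then show ?thesis using True am cm V by simp
    next
      case False
      moreover have "\<beta> \<le> m+1" using al by simp
      ultimately have ab: "a \<beta> = 1" using H1 by blast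
      then have bne: "\<beta> \<noteq> \<alpha> + 1" using \<open>a (\<alpha>+1) = 0\<close> by auto
      then have mL: "m \<le> L + \<alpha>" using cnd by simp
      have ones: "\<forall>s. \<beta> \<le> s \<and> s \<le> m+1 \<longrightarrow> a s = 1"
      proof (intro allI impI)
        fix s assume s: "\<beta> \<le> s \<and> s \<le> m+1"
        show "a s = 1"
        proof (rule ccontr)
          assume "a s \<noteq> 1"
          then have "a s = 0" using H1 s by force
          moreover have "s \<noteq> \<beta>" using ab \<open>a s \<noteq> 1\<close> by auto
          ultimately have "\<alpha> + 1 + L + 1 \<le> s"
            using H2[rule_format, of "\<alpha>+1" \<beta> s] ab \<open>a (\<alpha>+1) = 0\<close> s al bne by auto
          then show False using s mL by simp
        qed
      qed
      have "(\<Sum>s\<in>{\<beta>+1..m}. a s) = real (m + 1 - (\<beta>+1))"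
        using sum_ones[of "\<beta>+1" m a] ones by auto
      then have "(\<Sum>s\<in>{\<beta>+1..m}. a s) = real m - real \<beta>" using al by (simp add: of_nat_diff)
      moreover have "a (m+1) = 1" using ones al by simp
      ultimately show ?thesis using ab by (simp add: algebra_simps flip: distrib_left)
    qed
    ultimately show ?thesis unfolding eqR using True by (simp add: algebra_simps)
  qed
  then show ?thesis unfolding R_def .
qed

end

lemma UCP_D:
  assumes "(x, y) \<in> UCP T L l Cu Cl V Vu"
  shows "\<And>i. i \<notin> {1..T} \<Longrightarrow> x i = 0 \<and> y i = 0"
    and "\<And>i. i \<in> {1..T} \<Longrightarrow> x i \<ge> 0 \<and> (y i = 0 \<or> y i = 1)"
    and "\<And>t k. t \<in> {2..T} \<Longrightarrow> k \<in> {t..min T (t + L - 1)} \<Longrightarrow> - y (t - 1) + y t - y k \<le> 0"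
    and "\<And>i. i \<in> {1..T} \<Longrightarrow> - x i + Cl * y i \<le> 0 \<and> x i - Cu * y i \<le> 0"
    and "\<And>t. t \<in> {2..T} \<Longrightarrow> x t - x (t - 1) \<le> V * y (t - 1) + Vu * (1 - y (t - 1))"
    and "\<And>t. t \<in> {2..T} \<Longrightarrow> x (t - 1) - x t \<le> V * y t + Vu * (1 - y t)"
  using assms unfolding UCP_def by auto

lemma startup_exists:
  fixes y :: "nat \<Rightarrow> real"
  assumes y01: "\<forall>i\<in>{1..T}. y i = 0 \<or> y i = 1"
  shows "1 \<le> p \<Longrightarrow> p < r \<Longrightarrow> r \<le> T \<Longrightarrow> y p = 0 \<Longrightarrow> y r = 1 \<Longrightarrow> \<exists>u. p < u \<and> u \<le> r \<and> y (u - 1) = 0 \<and> y u = 1"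
proof (induction r)
  case 0
  then show ?case by simp
next
  case (Suc r)
  show ?case
  proof (cases "y r = 0")
    case True
    then show ?thesis using Suc.prems by auto
  next
    case False
    then have yr: "y r = 1" using y01 Suc.prems by auto
    have "p \<noteq> r" using yr Suc.prems by auto
    then have "p < r" using Suc.prems by simp
    then obtain u where "p < u \<and> u \<le> r \<and> y (u - 1) = 0 \<and> y u = 1"
      using Suc.IH Suc.prems yr by auto
    then show ?thesis by auto
  qed
qed

lemma gap_lemma:
  assumes P: "(x, y) \<in> UCP T L l Cu Cl V Vu"
    and "1 \<le> p" "p < r" "r < q" "q \<le> T" "y p = 0" "y r = 1" "y q = 0"
  shows "p + L + 1 \<le> q"
proof -
  have y01: "\<forall>i\<in>{1..T}. y i = 0 \<or> y i = 1" using UCP_D(2)[OF P] by blast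
  obtain u where u: "p < u" "u \<le> r" "y (u - 1) = 0" "y u = 1"
    using startup_exists[OF y01, of p r] assms by auto
  show ?thesis
  proof (rule ccontr)
    assume "\<not> p + L + 1 \<le> q"
    then have "q \<le> u + L - 1" using u by linarith
    then have "q \<in> {u..min T (u + L - 1)}" using u assms by auto
    moreover have "u \<in> {2..T}" using u assms by auto
    ultimately have "- y (u - 1) + y u - y q \<le> 0" using UCP_D(3)[OF P] by blast
    then show False using u assms by simp
  qed
qed

lemma ramp_up_bound:
  assumes P: "(x, y) \<in> UCP T L l Cu Cl V Vu" and V: "V \<ge> 0"
    and p: "1 \<le> p" "y p = 0"
  shows "1 \<le> d \<Longrightarrow> p + d \<le> T \<Longrightarrow> x (p + d) \<le> Vu + (real d - 1) * V"
proof (induction d)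
  case 0
  then show ?case by simp
next
  case (Suc d)
  have xp: "x p \<le> 0" using UCP_D(4)[of x y T L l Cu Cl V Vu p] P p Suc.prems by auto
  show ?case
  proof (cases "d = 0")
    case True
    have "x (p + 1) - x (p + 1 - 1) \<le> V * y (p + 1 - 1) + Vu * (1 - y (p + 1 - 1))"
      using UCP_D(5)[OF P, of "p+1"] Suc.prems True p by auto
    then show ?thesis using True p xp by simp
  next
    case False
    have ih: "x (p + d) \<le> Vu + (real d - 1) * V" using Suc False by simp
    have st: "x (p + Suc d) - x (p + d) \<le> V * y (p + d) + Vu * (1 - y (p + d))"
      using UCP_D(5)[OF P, of "p + Suc d"] Suc.prems p by auto
    have "y (p + d) = 0 \<or> y (p + d) = 1" using UCP_D(2)[OF P, of "p+d"] Suc.prems p by auto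
    then show ?thesis
    proof
      assume y0: "y (p + d) = 0"
      then have "x (p + d) \<le> 0" using UCP_D(4)[OF P, of "p+d"] Suc.prems p by auto
      moreover have "0 \<le> real d * V" using V by simp
      ultimately show ?thesis using st y0 by simp
    next
      assume "y (p + d) = 1"
      then show ?thesis using st ih by (simp add: algebra_simps)
    qed
  qed
qed

lemma ramp_down_bound:
  assumes P: "(x, y) \<in> UCP T L l Cu Cl V Vu" and V: "V \<ge> 0"
    and q: "q \<le> T" "y q = 0"
  shows "1 \<le> d \<Longrightarrow> d + 1 \<le> q \<Longrightarrow> x (q - d) \<le> Vu + (real d - 1) * V"
proof (induction d)
  case 0
  then show ?case by simp
next
  case (Suc d)
  have xq: "x q \<le> 0" using UCP_D(4)[of x y T L l Cu Cl V Vu q] P q Suc.prems by auto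
  show ?case
  proof (cases "d = 0")
    case True
    have "x (q - 1) - x q \<le> V * y q + Vu * (1 - y q)"
      using UCP_D(6)[OF P, of q] Suc.prems True q by auto
    then show ?thesis using True q xq by simp
  next
    case False
    have ih: "x (q - d) \<le> Vu + (real d - 1) * V" using Suc False by simp
    have e: "q - d - 1 = q - Suc d" by simp
    have st: "x (q - d - 1) - x (q - d) \<le> V * y (q - d) + Vu * (1 - y (q - d))"
    proof -
      have "q - d \<in> {2..T}" using Suc.prems q by auto
      from UCP_D(6)[OF P this] show ?thesis by simp
    qed
    have qd: "q - d \<in> {1..T}" using Suc.prems q by auto
    have "y (q - d) = 0 \<or> y (q - d) = 1" using UCP_D(2)[OF P qd] by auto
    then show ?thesis
    proof
      assume y0: "y (q - d) = 0"
      then have "x (q - d) \<le> 0" using UCP_D(4)[OF P qd] by auto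
      moreover have "0 \<le> real d * V" using V by simp
      ultimately show ?thesis using st y0 e by simp
    next
      assume "y (q - d) = 1"
      then show ?thesis using st ih e by (simp add: algebra_simps)
    qed
  qed
qed

lemma valid1:
  assumes P: "(x, y) \<in> UCP T L l Cu Cl V Vu"
    and V: "V > 0" and e0: "0 \<le> \<eta>" and eL: "\<eta> \<le> real L" and eD: "\<eta> * V \<le> Cu - Vu"
    and mD: "real m * V \<le> Cu - Vu" and Lm: "L + 1 \<le> m"
    and al: "1 \<le> \<alpha>" "\<alpha> < \<beta>" "\<beta> \<le> m" and cnd: "\<beta> = \<alpha> + 1 \<or> m \<le> L + \<alpha>"
    and t: "m + 2 \<le> t" "t \<le> T"
  shows "x t \<le> (Vu + \<eta> * V) * y t + (Cu - Vu - \<eta> * V) * y (t - 1)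
     - (\<Sum>s\<in>{1..\<alpha>} \<union> {\<beta>..m}. (Cu - Vu - real s * V) * (y (t - s) - y (t - s - 1)))"
proof -
  interpret w: win L m \<alpha> \<beta> \<eta> "Cu - Vu" V Vu "\<lambda>s. y (t - s)" "x t"
  proof
    show "\<forall>s\<le>m + 1. y (t - s) = 0 \<or> y (t - s) = 1"
    proof (intro allI impI)
      fix s assume "s \<le> m + 1"
      then have "t - s \<in> {1..T}" using t by auto
      then show "y (t - s) = 0 \<or> y (t - s) = 1" using UCP_D(2)[OF P] by blast
    qed
    show "\<forall>p r q. p < r \<longrightarrow> r < q \<longrightarrow> q \<le> m + 1 \<longrightarrow> y (t - p) = 0 \<longrightarrow> y (t - r) = 1 \<longrightarrow> y (t - q) = 0 \<longrightarrow> p + L + 1 \<le> q"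
    proof (intro allI impI)
      fix p r q assume h: "p < r" "r < q" "q \<le> m + 1" "y (t - p) = 0" "y (t - r) = 1" "y (t - q) = 0"
      have "t - q + L + 1 \<le> t - p"
        by (rule gap_lemma[OF P, of "t - q" "t - r" "t - p"]) (use h t in auto)
      then show "p + L + 1 \<le> q" using h t by linarith
    qed
    show "x t \<le> (Vu + (Cu - Vu)) * y (t - 0)"
      using UCP_D(4)[OF P, of t] t by auto
    show "\<forall>k. 1 \<le> k \<longrightarrow> k \<le> m + 1 \<longrightarrow> y (t - k) = 0 \<longrightarrow> x t \<le> Vu + (real k - 1) * V"
    proof (intro allI impI)
      fix k assume h: "1 \<le> k" "k \<le> m + 1" "y (t - k) = 0"
      have "x (t - k + k) \<le> Vu + (real k - 1) * V"
        by (rule ramp_up_bound[OF P]) (use h t V in auto)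
      then show "x t \<le> Vu + (real k - 1) * V" using h t by simp
    qed
  qed (use V e0 eL eD mD Lm al cnd in auto)
  show ?thesis using w.window_valid by (simp add: diff_diff_add)
qed

lemma valid2:
  assumes P: "(x, y) \<in> UCP T L l Cu Cl V Vu"
    and V: "V > 0" and e0: "0 \<le> \<eta>" and eL: "\<eta> \<le> real L" and eD: "\<eta> * V \<le> Cu - Vu"
    and mD: "real m * V \<le> Cu - Vu" and Lm: "L + 1 \<le> m"
    and al: "1 \<le> \<alpha>" "\<alpha> < \<beta>" "\<beta> \<le> m" and cnd: "\<beta> = \<alpha> + 1 \<or> m \<le> L + \<alpha>"
    and t: "1 \<le> t" "t + m + 1 \<le> T"
  shows "x t \<le> (Vu + \<eta> * V) * y t + (Cu - Vu - \<eta> * V) * y (t + 1)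
     - (\<Sum>s\<in>{1..\<alpha>} \<union> {\<beta>..m}. (Cu - Vu - real s * V) * (y (t + s) - y (t + s + 1)))"
proof -
  interpret w: win L m \<alpha> \<beta> \<eta> "Cu - Vu" V Vu "\<lambda>s. y (t + s)" "x t"
  proof
    show "\<forall>s\<le>m + 1. y (t + s) = 0 \<or> y (t + s) = 1"
    proof (intro allI impI)
      fix s assume "s \<le> m + 1"
      then have "t + s \<in> {1..T}" using t by auto
      then show "y (t + s) = 0 \<or> y (t + s) = 1" using UCP_D(2)[OF P] by blast
    qed
    show "\<forall>p r q. p < r \<longrightarrow> r < q \<longrightarrow> q \<le> m + 1 \<longrightarrow> y (t + p) = 0 \<longrightarrow> y (t + r) = 1 \<longrightarrow> y (t + q) = 0 \<longrightarrow> p + L + 1 \<le> q"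
    proof (intro allI impI)
      fix p r q assume h: "p < r" "r < q" "q \<le> m + 1" "y (t + p) = 0" "y (t + r) = 1" "y (t + q) = 0"
      have "t + p + L + 1 \<le> t + q"
        by (rule gap_lemma[OF P, of "t + p" "t + r" "t + q"]) (use h t in auto)
      then show "p + L + 1 \<le> q" by linarith
    qed
    show "x t \<le> (Vu + (Cu - Vu)) * y (t + 0)"
      using UCP_D(4)[OF P, of t] t by auto
    show "\<forall>k. 1 \<le> k \<longrightarrow> k \<le> m + 1 \<longrightarrow> y (t + k) = 0 \<longrightarrow> x t \<le> Vu + (real k - 1) * V"
    proof (intro allI impI)
      fix k assume h: "1 \<le> k" "k \<le> m + 1" "y (t + k) = 0"
      have "x (t + k - k) \<le> Vu + (real k - 1) * V"
        by (rule ramp_down_bound[OF P]) (use h t V in auto)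
      then show "x t \<le> Vu + (real k - 1) * V" by simp
    qed
  qed (use V e0 eL eD mD Lm al cnd in auto)
  show ?thesis using w.window_valid by (simp add: add.assoc)
qed

definition ind :: "nat \<Rightarrow> nat \<Rightarrow> nat \<Rightarrow> real" where
  "ind a b = (\<lambda>i. if a \<le> i \<and> i \<le> b then 1 else 0)"

definition ex :: "nat \<Rightarrow> point" where
  "ex k = ((\<lambda>i. if i = k then 1 else 0), 0)"

definition ey :: "nat \<Rightarrow> point" where
  "ey k = (0, (\<lambda>i. if i = k then 1 else 0))"

definition Wset :: "nat \<Rightarrow> point set" where
  "Wset T = ex ` {1..T} \<union> ey ` {1..T}"

lemma sum_apply_fun: "(\<Sum>k\<in>A. f k) (i::nat) = (\<Sum>k\<in>A. f k i)" for f :: "nat \<Rightarrow> nat \<Rightarrow> real"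
proof (induction A rule: infinite_finite_induct)
  case (infinite A) then show ?case by simp
next
  case empty then show ?case by simp
next
  case (insert x F) then show ?case by simp
qed

lemma scaleR_fun_apply: "(r *\<^sub>R f) i = r * f i" for f :: "nat \<Rightarrow> real"
  by (simp add: scaleR_fun_def)

lemma sum_ex: "(\<Sum>k\<in>{1..T}. x k *\<^sub>R ex k) = ((\<lambda>i. if i \<in> {1..T} then x i else 0), 0)"
proof -
  have f: "fst (\<Sum>k\<in>{1..T}. x k *\<^sub>R ex k) = (\<lambda>i. if i \<in> {1..T} then x i else 0)"
  proof
    fix i
    have "fst (\<Sum>k\<in>{1..T}. x k *\<^sub>R ex k) i = (\<Sum>k\<in>{1..T}. x k * (if i = k then 1 else 0))"
      by (simp add: fst_sum sum_apply_fun ex_def scaleR_fun_apply)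
    also have "\<dots> = (\<Sum>k\<in>{1..T}. if k = i then x k else 0)" by (intro sum.cong) auto
    also have "\<dots> = (if i \<in> {1..T} then x i else 0)" by (simp add: sum.delta)
    finally show "fst (\<Sum>k\<in>{1..T}. x k *\<^sub>R ex k) i = (if i \<in> {1..T} then x i else 0)" .
  qed
  have s: "snd (\<Sum>k\<in>{1..T}. x k *\<^sub>R ex k) = 0"
    by (simp add: snd_sum ex_def)
  show ?thesis using f s by (simp add: prod_eq_iff)
qed

lemma sum_ey: "(\<Sum>k\<in>{1..T}. y k *\<^sub>R ey k) = (0, (\<lambda>i. if i \<in> {1..T} then y i else 0))"
proof -
  have f: "snd (\<Sum>k\<in>{1..T}. y k *\<^sub>R ey k) = (\<lambda>i. if i \<in> {1..T} then y i else 0)"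
  proof
    fix i
    have "snd (\<Sum>k\<in>{1..T}. y k *\<^sub>R ey k) i = (\<Sum>k\<in>{1..T}. y k * (if i = k then 1 else 0))"
      by (simp add: snd_sum sum_apply_fun ey_def scaleR_fun_apply)
    also have "\<dots> = (\<Sum>k\<in>{1..T}. if k = i then y k else 0)" by (intro sum.cong) auto
    also have "\<dots> = (if i \<in> {1..T} then y i else 0)" by (simp add: sum.delta)
    finally show "snd (\<Sum>k\<in>{1..T}. y k *\<^sub>R ey k) i = (if i \<in> {1..T} then y i else 0)" .
  qed
  have s: "fst (\<Sum>k\<in>{1..T}. y k *\<^sub>R ey k) = 0"
    by (simp add: fst_sum ey_def)
  show ?thesis using f s by (simp add: prod_eq_iff)
qed

lemma supp_decomp:
  assumes "\<forall>i. i \<notin> {1..T} \<longrightarrow> x i = 0 \<and> y i = 0"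
  shows "(x, y) = (\<Sum>k\<in>{1..T}. x k *\<^sub>R ex k) + (\<Sum>k\<in>{1..T}. y k *\<^sub>R ey k)"
proof -
  show ?thesis unfolding sum_ex sum_ey using assms by (auto simp: fun_eq_iff)
qed

lemma supp_span:
  assumes "\<forall>i. i \<notin> {1..T} \<longrightarrow> x i = 0 \<and> y i = 0"
  shows "(x, y) \<in> span (Wset T)"
proof -
  have a: "(\<Sum>k\<in>{1..T}. x k *\<^sub>R ex k) \<in> span (Wset T)"
  proof (rule span_sum)
    fix k assume "k \<in> {1..T}"
    then have "ex k \<in> Wset T" by (simp add: Wset_def)
    then show "x k *\<^sub>R ex k \<in> span (Wset T)" by (intro span_scale span_base)
  qed
  have b: "(\<Sum>k\<in>{1..T}. y k *\<^sub>R ey k) \<in> span (Wset T)"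
  proof (rule span_sum)
    fix k assume "k \<in> {1..T}"
    then have "ey k \<in> Wset T" by (simp add: Wset_def)
    then show "y k *\<^sub>R ey k \<in> span (Wset T)" by (intro span_scale span_base)
  qed
  have "(x, y) = (\<Sum>k\<in>{1..T}. x k *\<^sub>R ex k) + (\<Sum>k\<in>{1..T}. y k *\<^sub>R ey k)"
    by (rule supp_decomp[OF assms])
  then show ?thesis using span_add[OF a b] by simp
qed

lemma ylift:
  assumes "(x, y) \<in> span B" "\<forall>k\<in>{1..T}. ex k \<in> span B" "\<forall>i. i \<notin> {1..T} \<longrightarrow> x i = 0"
  shows "(0, y) \<in> span B"
proof -
  have s: "(\<Sum>k\<in>{1..T}. x k *\<^sub>R ex k) \<in> span B"
  proof (rule span_sum)
    fix k assume "k \<in> {1..T}"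
    then show "x k *\<^sub>R ex k \<in> span B" using assms(2) by (intro span_scale) auto
  qed
  have "(x, y) - (\<Sum>k\<in>{1..T}. x k *\<^sub>R ex k) = (0, y)"
    unfolding sum_ex using assms(3) by (auto simp: fun_eq_iff)
  then show ?thesis using span_diff[OF assms(1) s] by simp
qed

lemma run_in_UCP:
  assumes ab: "1 \<le> a" "a \<le> b" "b \<le> T"
    and mu: "a = 1 \<or> b = T \<or> a + L \<le> b + 1"
    and x0: "\<forall>i. \<not> (a \<le> i \<and> i \<le> b) \<longrightarrow> x i = 0"
    and xb: "\<forall>i. a \<le> i \<and> i \<le> b \<longrightarrow> Cl \<le> x i \<and> x i \<le> Cu"
    and xr: "\<forall>i. a \<le> i \<and> i < b \<longrightarrow> \<bar>x (i+1) - x i\<bar> \<le> V"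
    and xa: "2 \<le> a \<longrightarrow> x a \<le> Vu" and xe: "b < T \<longrightarrow> x b \<le> Vu"
    and par: "0 < Cl" "0 \<le> Vu" "0 \<le> V"
  shows "(x, ind a b) \<in> UCP T L l Cu Cl V Vu"
proof -
  let ?y = "ind a b"
  have c1: "\<forall>t. t \<notin> {1..T} \<longrightarrow> x t = 0 \<and> ?y t = 0" using ab x0 by (auto simp: ind_def)
  have c2: "\<forall>t\<in>{1..T}. x t \<ge> 0 \<and> ?y t \<in> {0, 1}" using xb x0 par
    by (auto simp: ind_def)
  have c3: "\<forall>t\<in>{2..T}. \<forall>k\<in>{t..min T (t + L - 1)}. - ?y (t - 1) + ?y t - ?y k \<le> 0"
    using ab mu by (auto simp: ind_def)
  have c4: "\<forall>t\<in>{2..T}. \<forall>k\<in>{t..min T (t + l - 1)}. ?y (t - 1) - ?y t + ?y k \<le> 1"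
    using ab by (auto simp: ind_def)
  have c5: "\<forall>t\<in>{1..T}. - x t + Cl * ?y t \<le> 0 \<and> x t - Cu * ?y t \<le> 0"
    using xb x0 by (auto simp: ind_def)
  have c6: "\<forall>t\<in>{2..T}. x t - x (t - 1) \<le> V * ?y (t - 1) + Vu * (1 - ?y (t - 1))"
  proof
    fix t assume t: "t \<in> {2..T}"
    have e: "t - 1 + 1 = t" using t by auto
    consider "a \<le> t - 1 \<and> t - 1 \<le> b \<and> a \<le> t \<and> t \<le> b" | "a \<le> t - 1 \<and> t - 1 \<le> b \<and> \<not> (a \<le> t \<and> t \<le> b)"
      | "\<not> (a \<le> t - 1 \<and> t - 1 \<le> b) \<and> a \<le> t \<and> t \<le> b" | "\<not> (a \<le> t - 1 \<and> t - 1 \<le> b) \<and> \<not> (a \<le> t \<and> t \<le> b)"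
      by blast
    then show "x t - x (t - 1) \<le> V * ?y (t - 1) + Vu * (1 - ?y (t - 1))"
    proof cases
      case 1
      then have "\<bar>x (t - 1 + 1) - x (t - 1)\<bar> \<le> V" using xr t by auto
      then show ?thesis using 1 e by (simp add: ind_def)
    next
      case 2
      then show ?thesis using x0 xb par by (simp add: ind_def) (smt (verit))
    next
      case 3
      then have "t = a" using t by auto
      then show ?thesis using 3 x0 xa t by (simp add: ind_def)
    next
      case 4
      then show ?thesis using x0 par by (simp add: ind_def)
    qed
  qed
  have c7: "\<forall>t\<in>{2..T}. x (t - 1) - x t \<le> V * ?y t + Vu * (1 - ?y t)"
  proof
    fix t assume t: "t \<in> {2..T}"
    have e: "t - 1 + 1 = t" using t by auto
    consider "a \<le> t - 1 \<and> t - 1 \<le> b \<and> a \<le> t \<and> t \<le> b" | "a \<le> t - 1 \<and> t - 1 \<le> b \<and> \<not> (a \<le> t \<and> t \<le> b)"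
      | "\<not> (a \<le> t - 1 \<and> t - 1 \<le> b) \<and> a \<le> t \<and> t \<le> b" | "\<not> (a \<le> t - 1 \<and> t - 1 \<le> b) \<and> \<not> (a \<le> t \<and> t \<le> b)"
      by blast
    then show "x (t - 1) - x t \<le> V * ?y t + Vu * (1 - ?y t)"
    proof cases
      case 1
      then have "\<bar>x (t - 1 + 1) - x (t - 1)\<bar> \<le> V" using xr t by auto
      then show ?thesis using 1 e by (simp add: ind_def)
    next
      case 2
      then have "t - 1 = b" "b < T" "t = b + 1" using t by auto
      then have "x t = 0" "ind a b t = 0" "ind a b (t - 1) = 1" using x0 ab by (auto simp: ind_def)
      then show ?thesis using xe \<open>t - 1 = b\<close> \<open>b < T\<close> by simp
    next
      case 3
      then show ?thesis using x0 xb par by (simp add: ind_def) (smt (verit))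
    next
      case 4
      then show ?thesis using x0 par by (simp add: ind_def)
    qed
  qed
  show ?thesis unfolding UCP_def using c1 c2 c3 c4 c5 c6 c7 by blast
qed

lemma sumS_zero:
  fixes c f :: "nat \<Rightarrow> real"
  assumes "\<forall>s\<in>S. f s = 0"
  shows "(\<Sum>s\<in>S. c s * f s) = 0"
  using assms by simp

lemma sumS_delta:
  fixes c f :: "nat \<Rightarrow> real"
  assumes "finite S" "s0 \<in> S" "\<forall>s\<in>S. f s = (if s = s0 then 1 else 0)"
  shows "(\<Sum>s\<in>S. c s * f s) = c s0"
proof -
  have "(\<Sum>s\<in>S. c s * f s) = (\<Sum>s\<in>S. if s = s0 then c s else 0)"
    using assms(3) by (intro sum.cong) auto
  also have "\<dots> = c s0" using assms(1,2) by (simp add: sum.delta')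
  finally show ?thesis .
qed

locale prm =
  fixes T L l :: nat and Cu Cl V Vu \<eta> :: real and \<alpha> \<beta> m :: nat
  assumes L1: "L \<ge> 1" and CuCl: "Cu > Cl" and Cl0: "Cl > 0" and V0: "V > 0"
    and VuCu: "Vu + V \<le> Cu" and ClVu: "Cl < Vu" and VuV: "Vu < Cl + V"
    and e0: "0 \<le> \<eta>" and eL: "\<eta> \<le> real L" and eD: "\<eta> * V \<le> Cu - Vu"
    and mD: "real m * V \<le> Cu - Vu" and Lm: "L + 1 \<le> m" and mT: "m + 2 \<le> T"
    and al: "1 \<le> \<alpha>" "\<alpha> < \<beta>" "\<beta> \<le> m" and cnd: "\<beta> = \<alpha> + 1 \<or> m \<le> L + \<alpha>"
begin

abbreviation "P \<equiv> UCP T L l Cu Cl V Vu"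
abbreviation "S \<equiv> {1..\<alpha>} \<union> {\<beta>..m}"

definition "\<delta> = min V (Cu - Cl)"
definition "xf = (\<lambda>i. if 1 \<le> i \<and> i \<le> T then Cu else (0::real))"
definition "pf = (xf, ind 1 T)"
definition "pk k = ((\<lambda>i. if i = k then Cu - \<delta> else xf i), ind 1 T)"
definition "mid a b = ((\<lambda>i. Cl * ind a b i), ind a b)"
definition "upr t s = ((\<lambda>i. if t - s \<le> i \<and> i \<le> T then Vu + real (min (i - (t - s)) s) * V else 0), ind (t - s) T)"
definition "dnr t s = ((\<lambda>i. if 1 \<le> i \<and> i \<le> t + s then Vu + real (min (t + s - i) s) * V else 0), ind 1 (t + s))"

definition "R1 t (y::nat\<Rightarrow>real) = (Vu + \<eta> * V) * y t + (Cu - Vu - \<eta> * V) * y (t - 1)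
            - (\<Sum>s\<in>S. (Cu - Vu - real s * V) * (y (t - s) - y (t - s - 1)))"
definition "R2 t (y::nat\<Rightarrow>real) = (Vu + \<eta> * V) * y t + (Cu - Vu - \<eta> * V) * y (t + 1)
            - (\<Sum>s\<in>S. (Cu - Vu - real s * V) * (y (t + s) - y (t + s + 1)))"

lemma d0: "\<delta> > 0" "\<delta> \<le> V" "\<delta> \<le> Cu - Cl"
  using V0 CuCl by (auto simp: \<delta>_def)

lemma sV: "s \<le> m \<Longrightarrow> real s * V \<le> Cu - Vu"
proof -
  assume "s \<le> m"
  then have "real s * V \<le> real m * V" using V0 by simp
  then show ?thesis using mD by simp
qed

lemma zero_in: "(0::point) \<in> P"
  unfolding UCP_def zero_prod_def using Cl0 ClVu V0 by auto

lemma mid_in: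
  assumes "1 \<le> a" "a \<le> b" "b \<le> T" "a = 1 \<or> b = T \<or> a + L \<le> b + 1"
  shows "mid a b \<in> P"
  unfolding mid_def
  by (rule run_in_UCP) (use assms CuCl Cl0 ClVu V0 in \<open>auto simp: ind_def\<close>)

lemma pf_in: "pf \<in> P"
  unfolding pf_def
  by (rule run_in_UCP) (use mT CuCl Cl0 ClVu V0 in \<open>auto simp: xf_def\<close>)

lemma pk_in: assumes "k \<in> {1..T}" shows "pk k \<in> P"
  unfolding pk_def
proof (rule run_in_UCP)
  show "\<forall>i. 1 \<le> i \<and> i < T \<longrightarrow> \<bar>(if i + 1 = k then Cu - \<delta> else xf (i + 1)) - (if i = k then Cu - \<delta> else xf i)\<bar> \<le> V"
    using d0 by (auto simp: xf_def)
qed (use mT CuCl Cl0 ClVu V0 d0 assms in \<open>auto simp: xf_def\<close>)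

lemma upr_in: assumes "s \<le> m" "s < t" "t \<le> T" shows "upr t s \<in> P"
  unfolding upr_def
proof (rule run_in_UCP)
  have sv: "real s * V \<le> Cu - Vu" using sV assms by simp
  show "\<forall>i. t - s \<le> i \<and> i \<le> T \<longrightarrow>
      Cl \<le> (if t - s \<le> i \<and> i \<le> T then Vu + real (min (i - (t - s)) s) * V else 0) \<and>
      (if t - s \<le> i \<and> i \<le> T then Vu + real (min (i - (t - s)) s) * V else 0) \<le> Cu"
  proof (intro allI impI)
    fix i assume i: "t - s \<le> i \<and> i \<le> T"
    have "real (min (i - (t - s)) s) * V \<le> real s * V" using V0 by (intro mult_right_mono) auto
    moreover have "0 \<le> real (min (i - (t - s)) s) * V" using V0 by simp
    ultimately show "Cl \<le> (if t - s \<le> i \<and> i \<le> T then Vu + real (min (i - (t - s)) s) * V else 0) \<and>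
      (if t - s \<le> i \<and> i \<le> T then Vu + real (min (i - (t - s)) s) * V else 0) \<le> Cu"
      using i sv ClVu by simp
  qed
  show "\<forall>i. t - s \<le> i \<and> i < T \<longrightarrow>
      \<bar>(if t - s \<le> i + 1 \<and> i + 1 \<le> T then Vu + real (min (i + 1 - (t - s)) s) * V else 0) -
       (if t - s \<le> i \<and> i \<le> T then Vu + real (min (i - (t - s)) s) * V else 0)\<bar> \<le> V"
  proof (intro allI impI)
    fix i assume i: "t - s \<le> i \<and> i < T"
    have "min (i + 1 - (t - s)) s = min (i - (t - s)) s \<or> min (i + 1 - (t - s)) s = min (i - (t - s)) s + 1"
      using i by auto
    then show "\<bar>(if t - s \<le> i + 1 \<and> i + 1 \<le> T then Vu + real (min (i + 1 - (t - s)) s) * V else 0) -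
       (if t - s \<le> i \<and> i \<le> T then Vu + real (min (i - (t - s)) s) * V else 0)\<bar> \<le> V"
      using i V0 by (auto simp: algebra_simps)
  qed
qed (use assms Cl0 ClVu V0 in auto)

lemma dnr_in: assumes "s \<le> m" "1 \<le> t" "t + s < T" shows "dnr t s \<in> P"
  unfolding dnr_def
proof (rule run_in_UCP)
  have sv: "real s * V \<le> Cu - Vu" using sV assms by simp
  show "\<forall>i. 1 \<le> i \<and> i \<le> t + s \<longrightarrow>
      Cl \<le> (if 1 \<le> i \<and> i \<le> t + s then Vu + real (min (t + s - i) s) * V else 0) \<and>
      (if 1 \<le> i \<and> i \<le> t + s then Vu + real (min (t + s - i) s) * V else 0) \<le> Cu"
  proof (intro allI impI)
    fix i assume i: "1 \<le> i \<and> i \<le> t + s"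
    have "real (min (t + s - i) s) * V \<le> real s * V" using V0 by (intro mult_right_mono) auto
    moreover have "0 \<le> real (min (t + s - i) s) * V" using V0 by simp
    ultimately show "Cl \<le> (if 1 \<le> i \<and> i \<le> t + s then Vu + real (min (t + s - i) s) * V else 0) \<and>
      (if 1 \<le> i \<and> i \<le> t + s then Vu + real (min (t + s - i) s) * V else 0) \<le> Cu"
      using i sv ClVu by simp
  qed
  show "\<forall>i. 1 \<le> i \<and> i < t + s \<longrightarrow>
      \<bar>(if 1 \<le> i + 1 \<and> i + 1 \<le> t + s then Vu + real (min (t + s - (i + 1)) s) * V else 0) -
       (if 1 \<le> i \<and> i \<le> t + s then Vu + real (min (t + s - i) s) * V else 0)\<bar> \<le> V"
  proof (intro allI impI)
    fix i assume i: "1 \<le> i \<and> i < t + s"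
    have "min (t + s - i) s = min (t + s - (i + 1)) s \<or> min (t + s - i) s = min (t + s - (i + 1)) s + 1"
      using i by auto
    then show "\<bar>(if 1 \<le> i + 1 \<and> i + 1 \<le> t + s then Vu + real (min (t + s - (i + 1)) s) * V else 0) -
       (if 1 \<le> i \<and> i \<le> t + s then Vu + real (min (t + s - i) s) * V else 0)\<bar> \<le> V"
      using i V0 by (auto simp: algebra_simps)
  qed
qed (use assms Cl0 ClVu V0 in auto)

lemma finS: "finite S" by simp

context
  fixes t assumes t: "m + 2 \<le> t" "t \<le> T"
begin

lemma R1a: "R1 t (ind 1 T) = Cu"
proof -
  have "(\<Sum>s\<in>S. (Cu - Vu - real s * V) * (ind 1 T (t - s) - ind 1 T (t - s - 1))) = 0"
    by (rule sumS_zero) (use t al in \<open>auto simp: ind_def\<close>)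
  moreover have "ind 1 T t = 1" "ind 1 T (t - 1) = 1" using t Lm by (auto simp: ind_def)
  ultimately show ?thesis unfolding R1_def by simp
qed

lemma R1b: assumes "c \<le> t - m - 2 \<or> (t - \<beta> \<le> c \<and> c \<le> t - \<alpha> - 2)" shows "R1 t (ind 1 c) = 0"
proof -
  have "(\<Sum>s\<in>S. (Cu - Vu - real s * V) * (ind 1 c (t - s) - ind 1 c (t - s - 1))) = 0"
    by (rule sumS_zero) (use t al assms in \<open>auto simp: ind_def\<close>)
  moreover have "ind 1 c t = 0" "ind 1 c (t - 1) = 0" using assms t al by (auto simp: ind_def)
  ultimately show ?thesis unfolding R1_def by simp
qed

lemma R1c: "R1 t (ind 1 (t - 1)) = Cu - Vu - \<eta> * V"
proof -
  have "(\<Sum>s\<in>S. (Cu - Vu - real s * V) * (ind 1 (t - 1) (t - s) - ind 1 (t - 1) (t - s - 1))) = 0"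
    by (rule sumS_zero) (use t al in \<open>auto simp: ind_def\<close>)
  moreover have "ind 1 (t - 1) t = 0" "ind 1 (t - 1) (t - 1) = 1" using t al Lm by (auto simp: ind_def)
  ultimately show ?thesis unfolding R1_def by simp
qed

lemma R1d: assumes "t + 1 \<le> j" shows "R1 t (ind j T) = 0"
proof -
  have "(\<Sum>s\<in>S. (Cu - Vu - real s * V) * (ind j T (t - s) - ind j T (t - s - 1))) = 0"
    by (rule sumS_zero) (use t al assms in \<open>auto simp: ind_def\<close>)
  moreover have "ind j T t = 0" "ind j T (t - 1) = 0" using assms t by (auto simp: ind_def)
  ultimately show ?thesis unfolding R1_def by simp
qed

lemma R1e: assumes "s0 \<in> S" shows "R1 t (ind (t - s0) T) = Vu + real s0 * V"
proof -
  have "(\<Sum>s\<in>S. (Cu - Vu - real s * V) * (ind (t - s0) T (t - s) - ind (t - s0) T (t - s - 1))) = Cu - Vu - real s0 * V"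
    by (rule sumS_delta) (use t al assms in \<open>auto simp: ind_def\<close>)
  moreover have "ind (t - s0) T t = 1" "ind (t - s0) T (t - 1) = 1" using assms t al by (auto simp: ind_def)
  ultimately show ?thesis unfolding R1_def by (simp add: algebra_simps)
qed

lemma R1f: "R1 t (ind t T) = Vu + \<eta> * V"
proof -
  have "(\<Sum>s\<in>S. (Cu - Vu - real s * V) * (ind t T (t - s) - ind t T (t - s - 1))) = 0"
    by (rule sumS_zero) (use t al in \<open>auto simp: ind_def\<close>)
  moreover have "ind t T t = 1" "ind t T (t - 1) = 0" using t by (auto simp: ind_def)
  ultimately show ?thesis unfolding R1_def by simp
qed

lemma R1g: assumes "L \<in> S" shows "R1 t (ind (t - L) (t - 1)) = (Cu - Vu - \<eta> * V) - (Cu - Vu - real L * V)"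
proof -
  have "(\<Sum>s\<in>S. (Cu - Vu - real s * V) * (ind (t - L) (t - 1) (t - s) - ind (t - L) (t - 1) (t - s - 1))) = Cu - Vu - real L * V"
    by (rule sumS_delta) (use t al assms in \<open>auto simp: ind_def\<close>)
  moreover have "ind (t - L) (t - 1) t = 0" "ind (t - L) (t - 1) (t - 1) = 1" using assms t al L1 by (auto simp: ind_def)
  ultimately show ?thesis unfolding R1_def by (simp add: algebra_simps)
qed

end

context
  fixes t assumes t: "1 \<le> t" "t + m + 1 \<le> T"
begin

lemma R2a: "R2 t (ind 1 T) = Cu"
proof -
  have "(\<Sum>s\<in>S. (Cu - Vu - real s * V) * (ind 1 T (t + s) - ind 1 T (t + s + 1))) = 0"
    by (rule sumS_zero) (use t al in \<open>auto simp: ind_def\<close>)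
  moreover have "ind 1 T t = 1" "ind 1 T (t + 1) = 1" using t Lm by (auto simp: ind_def)
  ultimately show ?thesis unfolding R2_def by simp
qed

lemma R2b: assumes "t + m + 2 \<le> j \<or> (t + \<alpha> + 2 \<le> j \<and> j \<le> t + \<beta>)" shows "R2 t (ind j T) = 0"
proof -
  have "(\<Sum>s\<in>S. (Cu - Vu - real s * V) * (ind j T (t + s) - ind j T (t + s + 1))) = 0"
    by (rule sumS_zero) (use t al assms in \<open>auto simp: ind_def\<close>)
  moreover have "ind j T t = 0" "ind j T (t + 1) = 0" using assms t al by (auto simp: ind_def)
  ultimately show ?thesis unfolding R2_def by simp
qed

lemma R2c: "R2 t (ind (t + 1) T) = Cu - Vu - \<eta> * V"
proof -
  have "(\<Sum>s\<in>S. (Cu - Vu - real s * V) * (ind (t + 1) T (t + s) - ind (t + 1) T (t + s + 1))) = 0"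
    by (rule sumS_zero) (use t al in \<open>auto simp: ind_def\<close>)
  moreover have "ind (t + 1) T t = 0" "ind (t + 1) T (t + 1) = 1" using t al Lm by (auto simp: ind_def)
  ultimately show ?thesis unfolding R2_def by simp
qed

lemma R2d: assumes "c \<le> t - 1" shows "R2 t (ind 1 c) = 0"
proof -
  have "(\<Sum>s\<in>S. (Cu - Vu - real s * V) * (ind 1 c (t + s) - ind 1 c (t + s + 1))) = 0"
    by (rule sumS_zero) (use t al assms in \<open>auto simp: ind_def\<close>)
  moreover have "ind 1 c t = 0" "ind 1 c (t + 1) = 0" using assms t by (auto simp: ind_def)
  ultimately show ?thesis unfolding R2_def by simp
qed

lemma R2e: assumes "s0 \<in> S" shows "R2 t (ind 1 (t + s0)) = Vu + real s0 * V"
proof -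
  have "(\<Sum>s\<in>S. (Cu - Vu - real s * V) * (ind 1 (t + s0) (t + s) - ind 1 (t + s0) (t + s + 1))) = Cu - Vu - real s0 * V"
    by (rule sumS_delta) (use t al assms in \<open>auto simp: ind_def\<close>)
  moreover have "ind 1 (t + s0) t = 1" "ind 1 (t + s0) (t + 1) = 1" using assms t al by (auto simp: ind_def)
  ultimately show ?thesis unfolding R2_def by (simp add: algebra_simps)
qed

lemma R2f: "R2 t (ind 1 t) = Vu + \<eta> * V"
proof -
  have "(\<Sum>s\<in>S. (Cu - Vu - real s * V) * (ind 1 t (t + s) - ind 1 t (t + s + 1))) = 0"
    by (rule sumS_zero) (use t al in \<open>auto simp: ind_def\<close>)
  moreover have "ind 1 t t = 1" "ind 1 t (t + 1) = 0" using t by (auto simp: ind_def)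
  ultimately show ?thesis unfolding R2_def by simp
qed

lemma R2g: assumes "L \<in> S" shows "R2 t (ind (t + 1) (t + L)) = (Cu - Vu - \<eta> * V) - (Cu - Vu - real L * V)"
proof -
  have "(\<Sum>s\<in>S. (Cu - Vu - real s * V) * (ind (t + 1) (t + L) (t + s) - ind (t + 1) (t + L) (t + s + 1))) = Cu - Vu - real L * V"
    by (rule sumS_delta) (use t al assms in \<open>auto simp: ind_def\<close>)
  moreover have "ind (t + 1) (t + L) t = 0" "ind (t + 1) (t + L) (t + 1) = 1" using assms t al L1 by (auto simp: ind_def)
  ultimately show ?thesis unfolding R2_def by (simp add: algebra_simps)
qed

end

definition "psi1 t p = fst p t - R1 t (snd p)"
definition "psi2 t p = fst p t - R2 t (snd p)"

lemma lin_psi1: "linear (psi1 t)"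
proof (rule linearI)
  fix p q :: point
  show "psi1 t (p + q) = psi1 t p + psi1 t q"
    unfolding psi1_def R1_def
    by (simp add: algebra_simps sum.distrib sum_subtractf)
next
  fix c :: real and p :: point
  show "psi1 t (c *\<^sub>R p) = c *\<^sub>R psi1 t p"
    unfolding psi1_def R1_def
    by (simp add: algebra_simps sum_distrib_left scaleR_fun_def sum_subtractf)
qed

lemma lin_psi2: "linear (psi2 t)"
proof (rule linearI)
  fix p q :: point
  show "psi2 t (p + q) = psi2 t p + psi2 t q"
    unfolding psi2_def R2_def
    by (simp add: algebra_simps sum.distrib sum_subtractf)
next
  fix c :: real and p :: point
  show "psi2 t (c *\<^sub>R p) = c *\<^sub>R psi2 t p"
    unfolding psi2_def R2_def
    by (simp add: algebra_simps sum_distrib_left scaleR_fun_def sum_subtractf)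
qed

lemma PW: "P \<subseteq> span (Wset T)"
proof
  fix p assume "p \<in> P"
  then obtain x y where p: "p = (x, y)" "(x, y) \<in> P" by (cases p) auto
  have "\<forall>i. i \<notin> {1..T} \<longrightarrow> x i = 0 \<and> y i = 0" using UCP_D(1)[OF p(2)] by blast
  then show "p \<in> span (Wset T)" using supp_span p(1) by simp
qed

lemma finW: "finite (Wset T)" by (simp add: Wset_def)

lemma pf_pk: "k \<in> {1..T} \<Longrightarrow> pf - pk k = \<delta> *\<^sub>R ex k"
  by (auto simp: pf_def pk_def ex_def xf_def scaleR_fun_def fun_eq_iff)

lemma span_lemmas:
  assumes "insert pb B \<subseteq> P" "\<forall>k\<in>{1..T}. pk k \<in> insert pb B" "pf \<in> insert pb B"
  shows "\<forall>k\<in>{1..T}. ex k \<in> span (insert pb B)"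
    and "\<And>p. p \<in> insert pb B \<Longrightarrow> (0, snd p) \<in> span (insert pb B)"
proof -
  show ex: "\<forall>k\<in>{1..T}. ex k \<in> span (insert pb B)"
  proof
    fix k assume k: "k \<in> {1..T}"
    have "pf - pk k \<in> span (insert pb B)" using assms k by (intro span_diff span_base) auto
    then have "(1 / \<delta>) *\<^sub>R (pf - pk k) \<in> span (insert pb B)" by (rule span_scale)
    then show "ex k \<in> span (insert pb B)" using pf_pk[OF k] d0 by simp
  qed
  fix p assume p: "p \<in> insert pb B"
  then have pP: "(fst p, snd p) \<in> P" using assms by auto
  have "\<forall>i. i \<notin> {1..T} \<longrightarrow> fst p i = 0" using UCP_D(1)[OF pP] by blast
  moreover have "(fst p, snd p) \<in> span (insert pb B)" using p by (simp add: span_base)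
  ultimately show "(0, snd p) \<in> span (insert pb B)" using ylift ex by blast
qed

lemma ind_suf: "1 \<le> j \<Longrightarrow> j \<le> T + 1 \<Longrightarrow> ind 1 (j - 1) = ind 1 T - ind j T"
  by (auto simp: ind_def fun_eq_iff)

lemma ind_0: "ind 1 0 = 0"
  by (auto simp: ind_def fun_eq_iff)

lemma ey_ind: "1 \<le> j \<Longrightarrow> ey j = (0, ind 1 j) - (0, ind 1 (j - 1))"
  by (auto simp: ey_def ind_def fun_eq_iff)

lemma W_from_cover:
  assumes "\<forall>c\<le>T. (0, ind 1 c) \<in> span X" "\<forall>k\<in>{1..T}. ex k \<in> span X"
  shows "Wset T \<subseteq> span X"
proof
  fix w assume "w \<in> Wset T"
  then consider k where "k \<in> {1..T}" "w = ex k" | k where "k \<in> {1..T}" "w = ey k"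
    unfolding Wset_def by blast
  then show "w \<in> span X"
  proof cases
    case 1 then show ?thesis using assms by simp
  next
    case 2
    then have "(0, ind 1 k) - (0, ind 1 (k - 1)) \<in> span X" using assms by (intro span_diff) auto
    then show ?thesis using 2 ey_ind by simp
  qed
qed

lemma suf_step:
  assumes "(0, ind j T) \<in> span X" "(0, ind 1 T) \<in> span X" "1 \<le> j" "j \<le> T + 1"
  shows "(0, ind 1 (j - 1)) \<in> span X"
proof -
  have "(0, ind 1 T) - (0, ind j T) \<in> span X" using assms by (intro span_diff)
  then show ?thesis using ind_suf[OF assms(3,4)] by simp
qed

lemma fst_pt: "fst (mid a b) i = Cl * ind a b i" "snd (mid a b) = ind a b"
  "snd (upr t s) = ind (t - s) T" "snd (dnr t s) = ind 1 (t + s)" "snd pf = ind 1 T" "snd (pk k) = ind 1 T"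
  by (auto simp: mid_def upr_def dnr_def pf_def pk_def)

end

context prm begin

lemma facet1:
  assumes t: "m + 2 \<le> t" "t \<le> T" and ec: "\<eta> = 0 \<or> \<eta> * V = Cu - Vu \<or> (\<eta> = real L \<and> L \<in> S)"
  shows "affdim {p \<in> convex hull P. psi1 t p = 0} = affdim (convex hull P) - 1"
proof -
  define B where "B = {0, pf} \<union> pk ` ({1..T} - {t}) \<union> (\<lambda>c. mid 1 c) ` ({1..t-m-2} \<union> {t-\<beta>..t-\<alpha>-2})
     \<union> (\<lambda>j. mid j T) ` {t+1..T} \<union> upr t ` S \<union> (if \<eta> = 0 then {upr t 0} else {})
     \<union> (if \<eta> * V = Cu - Vu then {mid 1 (t-1)} else {}) \<union> (if \<eta> = real L \<and> L \<in> S then {mid (t-L) (t-1)} else {})"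
  have tT: "t \<in> {1..T}" using t by auto
  have BP: "B \<subseteq> P"
  proof -
    have "pk ` ({1..T} - {t}) \<subseteq> P" using pk_in by auto
    moreover have "(\<lambda>c. mid 1 c) ` ({1..t-m-2} \<union> {t-\<beta>..t-\<alpha>-2}) \<subseteq> P"
      using t al by (auto intro!: mid_in)
    moreover have "(\<lambda>j. mid j T) ` {t+1..T} \<subseteq> P" by (auto intro!: mid_in)
    moreover have "upr t ` S \<subseteq> P" using t al by (auto intro!: upr_in)
    moreover have "upr t 0 \<in> P" using t by (intro upr_in) auto
    moreover have "mid 1 (t-1) \<in> P" using t by (intro mid_in) auto
    moreover have "mid (t-L) (t-1) \<in> P" using t Lm L1 by (intro mid_in) auto
    ultimately show ?thesis unfolding B_def using zero_in pf_in by auto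
  qed
  have Bz: "\<forall>b\<in>B. psi1 t b = 0"
  proof -
    have "psi1 t 0 = 0" using lin_psi1 by (simp add: linear_0)
    moreover have "psi1 t pf = 0" unfolding psi1_def using R1a[OF t] t by (simp add: pf_def xf_def)
    moreover have "\<forall>k\<in>{1..T} - {t}. psi1 t (pk k) = 0"
    proof
      fix k assume "k \<in> {1..T} - {t}"
      then have "fst (pk k) t = Cu" using t by (simp add: pk_def xf_def)
      then show "psi1 t (pk k) = 0" unfolding psi1_def using R1a[OF t] by (simp add: fst_pt)
    qed
    moreover have "\<forall>c\<in>{1..t-m-2} \<union> {t-\<beta>..t-\<alpha>-2}. psi1 t (mid 1 c) = 0"
    proof
      fix c assume c: "c \<in> {1..t-m-2} \<union> {t-\<beta>..t-\<alpha>-2}"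
      have "R1 t (ind 1 c) = 0" using R1b[OF t] c by auto
      moreover have "ind 1 c t = 0" using c t by (auto simp: ind_def)
      ultimately show "psi1 t (mid 1 c) = 0" unfolding psi1_def by (simp add: fst_pt)
    qed
    moreover have "\<forall>j\<in>{t+1..T}. psi1 t (mid j T) = 0"
    proof
      fix j assume j: "j \<in> {t+1..T}"
      have "R1 t (ind j T) = 0" using R1d[OF t] j by auto
      moreover have "ind j T t = 0" using j by (auto simp: ind_def)
      ultimately show "psi1 t (mid j T) = 0" unfolding psi1_def by (simp add: fst_pt)
    qed
    moreover have "\<forall>s\<in>S. psi1 t (upr t s) = 0"
    proof
      fix s assume s: "s \<in> S"
      have st: "t - (t - s) = s" using s t al by auto
      have "fst (upr t s) t = Vu + real s * V" using st t by (simp add: upr_def)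
      then show "psi1 t (upr t s) = 0" unfolding psi1_def using R1e[OF t s] by (simp add: fst_pt)
    qed
    moreover have h6: "\<eta> = 0 \<Longrightarrow> psi1 t (upr t 0) = 0"
    proof -
      assume "\<eta> = 0"
      moreover have "fst (upr t 0) t = Vu" using t by (auto simp: upr_def)
      ultimately show "psi1 t (upr t 0) = 0" unfolding psi1_def using R1f[OF t] by (simp add: fst_pt)
    qed
    moreover have h7: "\<eta> * V = Cu - Vu \<Longrightarrow> psi1 t (mid 1 (t-1)) = 0"
    proof -
      assume "\<eta> * V = Cu - Vu"
      moreover have "ind 1 (t-1) t = 0" using t by (simp add: ind_def)
      ultimately show "psi1 t (mid 1 (t-1)) = 0" unfolding psi1_def using R1c[OF t] by (simp add: fst_pt)
    qed
    moreover have h8: "\<eta> = real L \<and> L \<in> S \<Longrightarrow> psi1 t (mid (t-L) (t-1)) = 0"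
    proof -
      assume h: "\<eta> = real L \<and> L \<in> S"
      moreover have "ind (t-L) (t-1) t = 0" using t by (simp add: ind_def)
      ultimately show "psi1 t (mid (t-L) (t-1)) = 0" unfolding psi1_def using R1g[OF t] by (simp add: fst_pt)
    qed
    moreover have "\<forall>b\<in>(if \<eta> = 0 then {upr t 0} else {}). psi1 t b = 0" using h6 by simp
    moreover have "\<forall>b\<in>(if \<eta> * V = Cu - Vu then {mid 1 (t-1)} else {}). psi1 t b = 0" using h7 by simp
    moreover have "\<forall>b\<in>(if \<eta> = real L \<and> L \<in> S then {mid (t-L) (t-1)} else {}). psi1 t b = 0" using h8 by simp
    ultimately show ?thesis unfolding B_def ball_Un by blast
  qed
  have pbP: "pk t \<in> P" using pk_in tT by simp
  have pbz: "psi1 t (pk t) \<noteq> 0"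
    unfolding psi1_def using R1a[OF t] d0 by (simp add: pk_def)
  have IP: "insert (pk t) B \<subseteq> P" using BP pbP by simp
  have pkB: "\<forall>k\<in>{1..T}. pk k \<in> insert (pk t) B" unfolding B_def by auto
  have pfB: "pf \<in> insert (pk t) B" unfolding B_def by auto
  note SL = span_lemmas[OF IP pkB pfB]
  let ?X = "insert (pk t) B"
  have yB: "\<And>p. p \<in> B \<Longrightarrow> (0, snd p) \<in> span ?X" using SL(2) by blast
  have full: "(0, ind 1 T) \<in> span ?X" using yB[of pf] unfolding B_def by (simp add: fst_pt)
  have suf: "\<And>j. (0, ind j T) \<in> span ?X \<Longrightarrow> 1 \<le> j \<Longrightarrow> j \<le> T + 1 \<Longrightarrow> (0, ind 1 (j - 1)) \<in> span ?X"
    using suf_step full by blast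
  have uprS: "\<And>s. s \<in> S \<Longrightarrow> (0, ind (t - s) T) \<in> span ?X"
  proof -
    fix s assume "s \<in> S"
    then have "upr t s \<in> B" unfolding B_def by blast
    from yB[OF this] show "(0, ind (t - s) T) \<in> span ?X" by (simp add: fst_pt)
  qed
  have midpre: "\<And>c. c \<in> {1..t-m-2} \<union> {t-\<beta>..t-\<alpha>-2} \<Longrightarrow> (0, ind 1 c) \<in> span ?X"
  proof -
    fix c assume "c \<in> {1..t-m-2} \<union> {t-\<beta>..t-\<alpha>-2}"
    then have "mid 1 c \<in> B" unfolding B_def by blast
    from yB[OF this] show "(0, ind 1 c) \<in> span ?X" by (simp add: fst_pt)
  qed
  have midsuf: "\<And>j. j \<in> {t+1..T} \<Longrightarrow> (0, ind j T) \<in> span ?X"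
  proof -
    fix j assume "j \<in> {t+1..T}"
    then have "mid j T \<in> B" unfolding B_def by blast
    from yB[OF this] show "(0, ind j T) \<in> span ?X" by (simp add: fst_pt)
  qed
  have ct: "(0, ind 1 (t - 1)) \<in> span ?X"
  proof -
    consider "\<eta> = 0" | "\<eta> * V = Cu - Vu" | "\<eta> = real L \<and> L \<in> S" using ec by blast
    then show ?thesis
    proof cases
      case 1
      then have "upr t 0 \<in> B" unfolding B_def by simp
      from yB[OF this] have "(0, ind t T) \<in> span ?X" by (simp add: fst_pt)
      then show ?thesis using suf t by simp
    next
      case 2
      then have "mid 1 (t - 1) \<in> B" unfolding B_def by simp
      from yB[OF this] show ?thesis by (simp add: fst_pt)
    next
      case 3
      then have "mid (t-L) (t-1) \<in> B" unfolding B_def by simp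
      from yB[OF this] have a: "(0, ind (t-L) (t-1)) \<in> span ?X" by (simp add: fst_pt)
      have b: "(0, ind (t-L) T) \<in> span ?X" using uprS 3 by blast
      have e: "ind t T = ind (t-L) T - ind (t-L) (t-1)" using t Lm by (auto simp: ind_def fun_eq_iff)
      have "(0, ind (t-L) T) - (0, ind (t-L) (t-1)) \<in> span ?X" by (rule span_diff[OF b a])
      then have "(0, ind t T) \<in> span ?X" using e by simp
      then show ?thesis using suf t by simp
    qed
  qed
  have cover: "\<forall>c\<le>T. (0, ind 1 c) \<in> span ?X"
  proof (intro allI impI)
    fix c assume cT: "c \<le> T"
    consider "c = 0" | "1 \<le> c \<and> c + m + 2 \<le> t" | "t \<le> c + m + 1 \<and> c + \<beta> + 1 \<le> t" | "t \<le> c + \<beta> \<and> c + \<alpha> + 2 \<le> t"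
      | "t \<le> c + \<alpha> + 1 \<and> c + 2 \<le> t" | "c + 1 = t" | "t \<le> c \<and> c < T" | "c = T"
      using t al cT by linarith
    then show "(0, ind 1 c) \<in> span ?X"
    proof cases
      case 1 then show ?thesis using ind_0 by (simp add: span_zero zero_prod_def[symmetric])
    next
      case 2 then have "c \<in> {1..t-m-2} \<union> {t-\<beta>..t-\<alpha>-2}" by auto
      then show ?thesis using midpre by blast
    next
      case 3
      then have s: "t - c - 1 \<in> S" "t - (t - c - 1) = c + 1" using t al by auto
      then have "(0, ind (c + 1) T) \<in> span ?X" using uprS[OF s(1)] by simp
      then show ?thesis using suf[of "c+1"] cT by simp
    next
      case 4 then have "c \<in> {1..t-m-2} \<union> {t-\<beta>..t-\<alpha>-2}" by auto
      then show ?thesis using midpre by blast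
    next
      case 5
      then have s: "t - c - 1 \<in> S" "t - (t - c - 1) = c + 1" using t al by auto
      then have "(0, ind (c + 1) T) \<in> span ?X" using uprS[OF s(1)] by simp
      then show ?thesis using suf[of "c+1"] cT by simp
    next
      case 6 then have "c = t - 1" by simp
      then show ?thesis using ct by simp
    next
      case 7
      then have "c + 1 \<in> {t+1..T}" by auto
      then have "(0, ind (c + 1) T) \<in> span ?X" using midsuf by blast
      then show ?thesis using suf[of "c+1"] cT by simp
    next
      case 8 then show ?thesis using full by simp
    qed
  qed
  have WB: "Wset T \<subseteq> span ?X" using W_from_cover[OF cover SL(1)] .
  show ?thesis
    using facet_generic[OF lin_psi1 zero_in PW finW BP Bz pbP pbz WB] .
qed

lemma facet2:
  assumes t: "1 \<le> t" "t + m + 1 \<le> T" and ec: "\<eta> = 0 \<or> \<eta> * V = Cu - Vu \<or> (\<eta> = real L \<and> L \<in> S)"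
  shows "affdim {p \<in> convex hull P. psi2 t p = 0} = affdim (convex hull P) - 1"
proof -
  define B where "B = {0, pf} \<union> pk ` ({1..T} - {t}) \<union> (\<lambda>c. mid 1 c) ` {1..t-1}
     \<union> (\<lambda>j. mid j T) ` ({t+m+2..T} \<union> {t+\<alpha>+2..t+\<beta>}) \<union> dnr t ` S \<union> (if \<eta> = 0 then {dnr t 0} else {})
     \<union> (if \<eta> * V = Cu - Vu then {mid (t+1) T} else {}) \<union> (if \<eta> = real L \<and> L \<in> S then {mid (t+1) (t+L)} else {})"
  have tT: "t \<in> {1..T}" using t by auto
  have BP: "B \<subseteq> P"
  proof -
    have "pk ` ({1..T} - {t}) \<subseteq> P" using pk_in by auto
    moreover have "(\<lambda>c. mid 1 c) ` {1..t-1} \<subseteq> P"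
      using t by (auto intro!: mid_in)
    moreover have "(\<lambda>j. mid j T) ` ({t+m+2..T} \<union> {t+\<alpha>+2..t+\<beta>}) \<subseteq> P" using t al by (auto intro!: mid_in)
    moreover have "dnr t ` S \<subseteq> P" using t al by (auto intro!: dnr_in)
    moreover have "dnr t 0 \<in> P" using t by (intro dnr_in) auto
    moreover have "mid (t+1) T \<in> P" using t by (intro mid_in) auto
    moreover have "mid (t+1) (t+L) \<in> P" using t Lm L1 by (intro mid_in) auto
    ultimately show ?thesis unfolding B_def using zero_in pf_in by auto
  qed
  have Bz: "\<forall>b\<in>B. psi2 t b = 0"
  proof -
    have "psi2 t 0 = 0" using lin_psi2 by (simp add: linear_0)
    moreover have "psi2 t pf = 0" unfolding psi2_def using R2a[OF t] t by (simp add: pf_def xf_def)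
    moreover have "\<forall>k\<in>{1..T} - {t}. psi2 t (pk k) = 0"
    proof
      fix k assume "k \<in> {1..T} - {t}"
      then have "fst (pk k) t = Cu" using t by (simp add: pk_def xf_def)
      then show "psi2 t (pk k) = 0" unfolding psi2_def using R2a[OF t] by (simp add: fst_pt)
    qed
    moreover have "\<forall>c\<in>{1..t-1}. psi2 t (mid 1 c) = 0"
    proof
      fix c assume c: "c \<in> {1..t-1}"
      have "R2 t (ind 1 c) = 0" using R2d[OF t] c by auto
      moreover have "ind 1 c t = 0" using c t by (auto simp: ind_def)
      ultimately show "psi2 t (mid 1 c) = 0" unfolding psi2_def by (simp add: fst_pt)
    qed
    moreover have "\<forall>j\<in>{t+m+2..T} \<union> {t+\<alpha>+2..t+\<beta>}. psi2 t (mid j T) = 0"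
    proof
      fix j assume j: "j \<in> {t+m+2..T} \<union> {t+\<alpha>+2..t+\<beta>}"
      have "R2 t (ind j T) = 0" using R2b[OF t] j by auto
      moreover have "ind j T t = 0" using j by (auto simp: ind_def)
      ultimately show "psi2 t (mid j T) = 0" unfolding psi2_def by (simp add: fst_pt)
    qed
    moreover have "\<forall>s\<in>S. psi2 t (dnr t s) = 0"
    proof
      fix s assume s: "s \<in> S"
      have "fst (dnr t s) t = Vu + real s * V" using t by (simp add: dnr_def)
      then show "psi2 t (dnr t s) = 0" unfolding psi2_def using R2e[OF t s] by (simp add: fst_pt)
    qed
    moreover have h6: "\<eta> = 0 \<Longrightarrow> psi2 t (dnr t 0) = 0"
    proof -
      assume "\<eta> = 0"
      moreover have "fst (dnr t 0) t = Vu" using t by (simp add: dnr_def)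
      ultimately show "psi2 t (dnr t 0) = 0" unfolding psi2_def using R2f[OF t] by (simp add: fst_pt)
    qed
    moreover have h7: "\<eta> * V = Cu - Vu \<Longrightarrow> psi2 t (mid (t+1) T) = 0"
    proof -
      assume "\<eta> * V = Cu - Vu"
      moreover have "ind (t+1) T t = 0" by (simp add: ind_def)
      ultimately show "psi2 t (mid (t+1) T) = 0" unfolding psi2_def using R2c[OF t] by (simp add: fst_pt)
    qed
    moreover have h8: "\<eta> = real L \<and> L \<in> S \<Longrightarrow> psi2 t (mid (t+1) (t+L)) = 0"
    proof -
      assume h: "\<eta> = real L \<and> L \<in> S"
      moreover have "ind (t+1) (t+L) t = 0" by (simp add: ind_def)
      ultimately show "psi2 t (mid (t+1) (t+L)) = 0" unfolding psi2_def using R2g[OF t] by (simp add: fst_pt)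
    qed
    moreover have "\<forall>b\<in>(if \<eta> = 0 then {dnr t 0} else {}). psi2 t b = 0" using h6 by simp
    moreover have "\<forall>b\<in>(if \<eta> * V = Cu - Vu then {mid (t+1) T} else {}). psi2 t b = 0" using h7 by simp
    moreover have "\<forall>b\<in>(if \<eta> = real L \<and> L \<in> S then {mid (t+1) (t+L)} else {}). psi2 t b = 0" using h8 by simp
    ultimately show ?thesis unfolding B_def ball_Un by blast
  qed
  have pbP: "pk t \<in> P" using pk_in tT by simp
  have pbz: "psi2 t (pk t) \<noteq> 0"
    unfolding psi2_def using R2a[OF t] d0 by (simp add: pk_def)
  have IP: "insert (pk t) B \<subseteq> P" using BP pbP by simp
  have pkB: "\<forall>k\<in>{1..T}. pk k \<in> insert (pk t) B" unfolding B_def by auto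
  have pfB: "pf \<in> insert (pk t) B" unfolding B_def by auto
  note SL = span_lemmas[OF IP pkB pfB]
  let ?X = "insert (pk t) B"
  have yB: "\<And>p. p \<in> B \<Longrightarrow> (0, snd p) \<in> span ?X" using SL(2) by blast
  have full: "(0, ind 1 T) \<in> span ?X" using yB[of pf] unfolding B_def by (simp add: fst_pt)
  have suf: "\<And>j. (0, ind j T) \<in> span ?X \<Longrightarrow> 1 \<le> j \<Longrightarrow> j \<le> T + 1 \<Longrightarrow> (0, ind 1 (j - 1)) \<in> span ?X"
    using suf_step full by blast
  have dnrS: "\<And>s. s \<in> S \<Longrightarrow> (0, ind 1 (t + s)) \<in> span ?X"
  proof -
    fix s assume "s \<in> S"
    then have "dnr t s \<in> B" unfolding B_def by blast
    from yB[OF this] show "(0, ind 1 (t + s)) \<in> span ?X" by (simp add: fst_pt)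
  qed
  have midpre: "\<And>c. c \<in> {1..t-1} \<Longrightarrow> (0, ind 1 c) \<in> span ?X"
  proof -
    fix c assume "c \<in> {1..t-1}"
    then have "mid 1 c \<in> B" unfolding B_def by blast
    from yB[OF this] show "(0, ind 1 c) \<in> span ?X" by (simp add: fst_pt)
  qed
  have midsuf: "\<And>j. j \<in> {t+m+2..T} \<union> {t+\<alpha>+2..t+\<beta>} \<Longrightarrow> (0, ind j T) \<in> span ?X"
  proof -
    fix j assume "j \<in> {t+m+2..T} \<union> {t+\<alpha>+2..t+\<beta>}"
    then have "mid j T \<in> B" unfolding B_def by blast
    from yB[OF this] show "(0, ind j T) \<in> span ?X" by (simp add: fst_pt)
  qed
  have ct: "(0, ind 1 t) \<in> span ?X"
  proof -
    consider "\<eta> = 0" | "\<eta> * V = Cu - Vu" | "\<eta> = real L \<and> L \<in> S" using ec by blast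
    then show ?thesis
    proof cases
      case 1
      then have "dnr t 0 \<in> B" unfolding B_def by simp
      from yB[OF this] show ?thesis by (simp add: fst_pt)
    next
      case 2
      then have "mid (t + 1) T \<in> B" unfolding B_def by simp
      from yB[OF this] have "(0, ind (t+1) T) \<in> span ?X" by (simp add: fst_pt)
      then show ?thesis using suf[of "t+1"] t by simp
    next
      case 3
      then have "mid (t+1) (t+L) \<in> B" unfolding B_def by simp
      from yB[OF this] have a: "(0, ind (t+1) (t+L)) \<in> span ?X" by (simp add: fst_pt)
      have b: "(0, ind 1 (t+L)) \<in> span ?X" using dnrS 3 by blast
      have e: "ind 1 t = ind 1 (t+L) - ind (t+1) (t+L)" using t by (auto simp: ind_def fun_eq_iff)
      have "(0, ind 1 (t+L)) - (0, ind (t+1) (t+L)) \<in> span ?X" by (rule span_diff[OF b a])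
      then show ?thesis using e by simp
    qed
  qed
  have cover: "\<forall>c\<le>T. (0, ind 1 c) \<in> span ?X"
  proof (intro allI impI)
    fix c assume cT: "c \<le> T"
    consider "c = 0" | "1 \<le> c \<and> c + 1 \<le> t" | "c = t" | "t + 1 \<le> c \<and> c \<le> t + \<alpha>"
      | "t + \<alpha> + 1 \<le> c \<and> c + 1 \<le> t + \<beta>" | "t + \<beta> \<le> c \<and> c \<le> t + m" | "t + m + 1 \<le> c \<and> c < T" | "c = T"
      using t al cT by linarith
    then show "(0, ind 1 c) \<in> span ?X"
    proof cases
      case 1 then show ?thesis using ind_0 by (simp add: span_zero zero_prod_def[symmetric])
    next
      case 2 then have "c \<in> {1..t-1}" by auto
      then show ?thesis using midpre by blast
    next
      case 3 then show ?thesis using ct by simp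
    next
      case 4
      then have s: "c - t \<in> S" "t + (c - t) = c" using t al by auto
      then show ?thesis using dnrS[OF s(1)] by simp
    next
      case 5
      then have "c + 1 \<in> {t+m+2..T} \<union> {t+\<alpha>+2..t+\<beta>}" by auto
      then have "(0, ind (c + 1) T) \<in> span ?X" using midsuf by blast
      then show ?thesis using suf[of "c+1"] cT by simp
    next
      case 6
      then have s: "c - t \<in> S" "t + (c - t) = c" using t al by auto
      then show ?thesis using dnrS[OF s(1)] by simp
    next
      case 7
      then have "c + 1 \<in> {t+m+2..T} \<union> {t+\<alpha>+2..t+\<beta>}" by auto
      then have "(0, ind (c + 1) T) \<in> span ?X" using midsuf by blast
      then show ?thesis using suf[of "c+1"] cT by simp
    next
      case 8 then show ?thesis using full by simp
    qed
  qed
  have WB: "Wset T \<subseteq> span ?X" using W_from_cover[OF cover SL(1)] .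
  show ?thesis
    using facet_generic[OF lin_psi2 zero_in PW finW BP Bz pbP pbz WB] .
qed

end

lemma hull_valid:
  fixes \<psi> :: "point \<Rightarrow> real"
  assumes lin: "linear \<psi>" and v: "\<forall>p\<in>P. \<psi> p \<le> 0"
  shows "\<forall>p\<in>convex hull P. \<psi> p \<le> 0"
proof -
  have "convex {p. \<psi> p \<le> 0}"
    unfolding convex_def
  proof (intro allI impI ballI, clarify)
    fix x y :: point and u v :: real
    assume h: "\<psi> x \<le> 0" "\<psi> y \<le> 0" "0 \<le> u" "0 \<le> v" "u + v = 1"
    have "\<psi> (u *\<^sub>R x + v *\<^sub>R y) = u * \<psi> x + v * \<psi> y"
      using lin by (simp add: linear_add linear_scale)
    moreover have "u * \<psi> x \<le> 0" "v * \<psi> y \<le> 0" using h by (auto simp: mult_nonneg_nonpos)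
    ultimately show "\<psi> (u *\<^sub>R x + v *\<^sub>R y) \<le> 0" by simp
  qed
  then have "convex hull P \<subseteq> {p. \<psi> p \<le> 0}" using v by (intro hull_minimal) auto
  then show ?thesis by auto
qed

theorem proposition6:
  fixes T L l :: nat and Cu Cl V Vu \<eta> :: real and \<alpha> \<beta> smax :: nat
  assumes "T \<ge> 1" "L \<ge> 1" "l \<ge> 1"
    and "Cu > Cl" "Cl > 0" "V > 0" "Vu + V \<le> Cu" "Cl < Vu" "Vu < Cl + V"
    and "0 \<le> \<eta>" "\<eta> \<le> min (real L) ((Cu - Vu) / V)"
    and "int L + 1 \<le> int smax" "int smax \<le> int T - 2"
    and "int smax \<le> \<lfloor>(Cu - Vu) / V\<rfloor>"
    and "1 \<le> \<alpha>" "\<alpha> < \<beta>" "\<beta> \<le> smax"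
    and "\<beta> = \<alpha> + 1 \<or> smax \<le> L + \<alpha>"
  defines "Q \<equiv> convex hull (UCP T L l Cu Cl V Vu)"
    and "rhs1 \<equiv> \<lambda>t (p::point). (Vu + \<eta> * V) * snd p t + (Cu - Vu - \<eta> * V) * snd p (t - 1)
            - (\<Sum>s\<in>{1..\<alpha>} \<union> {\<beta>..smax}. (Cu - Vu - real s * V) * (snd p (t - s) - snd p (t - s - 1)))"
    and "rhs2 \<equiv> \<lambda>t (p::point). (Vu + \<eta> * V) * snd p t + (Cu - Vu - \<eta> * V) * snd p (t + 1)
            - (\<Sum>s\<in>{1..\<alpha>} \<union> {\<beta>..smax}. (Cu - Vu - real s * V) * (snd p (t + s) - snd p (t + s + 1)))"
  shows "(\<forall>t\<in>{smax + 2..T}. valid_ineq Q (\<lambda>p. fst p t) (rhs1 t))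
       \<and> (\<forall>t. 1 \<le> t \<and> int t \<le> int T - int smax - 1 \<longrightarrow> valid_ineq Q (\<lambda>p. fst p t) (rhs2 t))
       \<and> ((\<eta> = 0 \<or> \<eta> = (Cu - Vu) / V \<or> (\<eta> = real L \<and> L \<in> {1..\<alpha>} \<union> {\<beta>..smax})) \<longrightarrow>
            (\<forall>t\<in>{smax + 2..T}. facet_ineq Q (\<lambda>p. fst p t) (rhs1 t))
          \<and> (\<forall>t. 1 \<le> t \<and> int t \<le> int T - int smax - 1 \<longrightarrow> facet_ineq Q (\<lambda>p. fst p t) (rhs2 t)))"
proof -
  have V0: "V > 0" using assms by simp
  have eD: "\<eta> * V \<le> Cu - Vu"
  proof -
    have "\<eta> \<le> (Cu - Vu) / V" using assms(11) by simp
    then show ?thesis using V0 by (simp add: pos_le_divide_eq)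
  qed
  have mD: "real smax * V \<le> Cu - Vu"
  proof -
    have "real_of_int (int smax) \<le> (Cu - Vu) / V" using assms(14) le_floor_iff by blast
    then have "real smax \<le> (Cu - Vu) / V" by simp
    then show ?thesis using V0 by (simp add: pos_le_divide_eq)
  qed
  interpret prm T L l Cu Cl V Vu \<eta> \<alpha> \<beta> smax
    by unfold_locales (use assms eD mD in auto)
  have r1: "\<And>t p. rhs1 t p = R1 t (snd p)" unfolding rhs1_def R1_def by simp
  have r2: "\<And>t p. rhs2 t p = R2 t (snd p)" unfolding rhs2_def R2_def by simp
  have t2: "\<And>t. (1 \<le> t \<and> int t \<le> int T - int smax - 1) = (1 \<le> t \<and> t + smax + 1 \<le> T)" by auto
  have v1: "\<forall>t\<in>{smax + 2..T}. \<forall>p\<in>Q. psi1 t p \<le> 0"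
  proof
    fix t assume t: "t \<in> {smax + 2..T}"
    have "\<forall>p\<in>P. psi1 t p \<le> 0"
    proof
      fix p assume "p \<in> P"
      then obtain x y where p: "p = (x, y)" "(x, y) \<in> P" by (cases p) auto
      have "x t \<le> R1 t y" unfolding R1_def
        by (rule valid1[OF p(2)]) (use assms eD mD t in auto)
      then show "psi1 t p \<le> 0" unfolding psi1_def p(1) by simp
    qed
    then show "\<forall>p\<in>Q. psi1 t p \<le> 0" unfolding Q_def using hull_valid[OF lin_psi1] by blast
  qed
  have v2: "\<forall>t. 1 \<le> t \<and> t + smax + 1 \<le> T \<longrightarrow> (\<forall>p\<in>Q. psi2 t p \<le> 0)"
  proof (intro allI impI)
    fix t assume t: "1 \<le> t \<and> t + smax + 1 \<le> T"
    have "\<forall>p\<in>P. psi2 t p \<le> 0"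
    proof
      fix p assume "p \<in> P"
      then obtain x y where p: "p = (x, y)" "(x, y) \<in> P" by (cases p) auto
      have "x t \<le> R2 t y" unfolding R2_def
        by (rule valid2[OF p(2)]) (use assms eD mD t in auto)
      then show "psi2 t p \<le> 0" unfolding psi2_def p(1) by simp
    qed
    then show "\<forall>p\<in>Q. psi2 t p \<le> 0" unfolding Q_def using hull_valid[OF lin_psi2] by blast
  qed
  have V1: "\<forall>t\<in>{smax + 2..T}. valid_ineq Q (\<lambda>p. fst p t) (rhs1 t)"
    using v1 unfolding valid_ineq_def r1 psi1_def by auto
  have V2: "\<forall>t. 1 \<le> t \<and> int t \<le> int T - int smax - 1 \<longrightarrow> valid_ineq Q (\<lambda>p. fst p t) (rhs2 t)"
    using v2 unfolding valid_ineq_def r2 psi2_def t2 by auto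
  have F: "(\<eta> = 0 \<or> \<eta> = (Cu - Vu) / V \<or> (\<eta> = real L \<and> L \<in> {1..\<alpha>} \<union> {\<beta>..smax})) \<longrightarrow>
            (\<forall>t\<in>{smax + 2..T}. facet_ineq Q (\<lambda>p. fst p t) (rhs1 t))
          \<and> (\<forall>t. 1 \<le> t \<and> int t \<le> int T - int smax - 1 \<longrightarrow> facet_ineq Q (\<lambda>p. fst p t) (rhs2 t))"
  proof
    assume h: "\<eta> = 0 \<or> \<eta> = (Cu - Vu) / V \<or> (\<eta> = real L \<and> L \<in> {1..\<alpha>} \<union> {\<beta>..smax})"
    have ec: "\<eta> = 0 \<or> \<eta> * V = Cu - Vu \<or> (\<eta> = real L \<and> L \<in> {1..\<alpha>} \<union> {\<beta>..smax})"
      using h V0 by auto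
    have e1: "\<And>t. {p \<in> Q. fst p t = rhs1 t p} = {p \<in> convex hull P. psi1 t p = 0}"
      unfolding Q_def r1 psi1_def by auto
    have e2: "\<And>t. {p \<in> Q. fst p t = rhs2 t p} = {p \<in> convex hull P. psi2 t p = 0}"
      unfolding Q_def r2 psi2_def by auto
    show "(\<forall>t\<in>{smax + 2..T}. facet_ineq Q (\<lambda>p. fst p t) (rhs1 t))
          \<and> (\<forall>t. 1 \<le> t \<and> int t \<le> int T - int smax - 1 \<longrightarrow> facet_ineq Q (\<lambda>p. fst p t) (rhs2 t))"
    proof (intro conjI ballI allI impI)
      fix t assume t: "t \<in> {smax + 2..T}"
      have "affdim {p \<in> convex hull P. psi1 t p = 0} = affdim (convex hull P) - 1"
        using facet1[of t] t ec by auto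
      then show "facet_ineq Q (\<lambda>p. fst p t) (rhs1 t)"
        unfolding facet_ineq_def using V1 t e1 Q_def by simp
    next
      fix t assume t: "1 \<le> t \<and> int t \<le> int T - int smax - 1"
      have "affdim {p \<in> convex hull P. psi2 t p = 0} = affdim (convex hull P) - 1"
        using facet2[of t] t ec by auto
      then show "facet_ineq Q (\<lambda>p. fst p t) (rhs2 t)"
        unfolding facet_ineq_def using V2 t e2 Q_def by simp
    qed
  qed
  show ?thesis using V1 V2 F by blast
qed

end
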